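(* Let $\mathfrak{U}$ be a Banach algebra such that $\mathfrak{U}^\sharp$ is symmetrically pseudo-amenable, with a symmetric approximate diagonal $\{\mathbf{t}_\lambda\}_{\lambda\in\Lambda}\subseteq\mathfrak{U}^\sharp\widehat{\otimes}\mathfrak{U}^\sharp$. Let $X$ be a Banach $\mathfrak{U}$-bimodule such that (i) for each $x\in X$ the net $\{\psi_x(\mathbf{t}_\lambda)\}_{\lambda\in\Lambda}$ is bounded, and (ii) for each bounded Jordan derivation $D:\mathfrak{U}\to X$ the net $\{\Phi_D(\mathbf{t}_\lambda)\}_{\lambda\in\Lambda}$ is bounded. Then every bounded Jordan derivation from $\mathfrak{U}$ into $X$ is a derivation.
   Context: $\mathfrak{U}^\sharp=\mathfrak{U}\oplus\mathbb{C}1$ is the unitization of $\mathfrak{U}$ with the $\ell^1$-norm (a unit is adjoined even if $\mathfrak{U}$ is unital); a Banach $\mathfrak{U}$-bimodule $X$ is made a unital Banach $\mathfrak{U}^\sharp$-bimodule by $1x=x1=x$. For $x\in X$, $\psi_x:\mathfrak{U}^\sharp\widehat{\otimes}\mathfrak{U}^\sharp\to X$ is the bounded linear map with $\psi_x(a\otimes b)=axb$. For a bounded linear map $T:\mathfrak{U}\to X$, extended to $\mathfrak{U}^\sharp$ by $T(1)=0$, $\Phi_T:\mathfrak{U}^\sharp\widehat{\otimes}\mathfrak{U}^\sharp\to X$ is the bounded linear map with $\Phi_T(a\otimes b)=aT(b)$. A linear map $\delta:\mathfrak{U}\to X$ is a derivation if $\delta(ab)=\delta(a)b+a\delta(b)$,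 and a Jordan derivation if $\delta(ab+ba)=\delta(a)b+a\delta(b)+\delta(b)a+b\delta(a)$, for all $a,b$. For a Banach algebra $\mathfrak{A}$, $\mathfrak{A}\widehat{\otimes}\mathfrak{A}$ is the projective tensor product with $a(b\otimes c)=ab\otimes c$, $(b\otimes c)a=b\otimes ca$, $\pi(b\otimes c)=bc$ (extended linearly and continuously); the flip is $(b\otimes c)^\circ=c\otimes b$ and $\mathbf{t}$ is symmetric if $\mathbf{t}^\circ=\mathbf{t}$. A symmetric approximate diagonal is a net $\{\mathbf{t}_\lambda\}$ (not necessarily bounded) of symmetric elements with $a\mathbf{t}_\lambda-\mathbf{t}_\lambda a\to0$ and $\pi(\mathbf{t}_\lambda)a\to a$ for all $a\in\mathfrak{A}$; $\mathfrak{A}$ is symmetrically pseudo-amenable if it has one. *)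

theory Defs
  imports "HOL-Analysis.Analysis"
begin

text \<open>The library only has real normed spaces. A complex Banach algebra is modelled
as a real Banach algebra (type class) together with a complex scalar multiplication
scA compatible with the real one, the ring structure and the norm.\<close>

definition complex_banach_space :: "(complex \<Rightarrow> 'x::banach \<Rightarrow> 'x) \<Rightarrow> bool" where
  "complex_banach_space sc \<longleftrightarrow>
     (\<forall>r x. sc (complex_of_real r) x = r *\<^sub>R x) \<and>
     (\<forall>c d x. sc (c + d) x = sc c x + sc d x) \<and>
     (\<forall>c x y. sc c (x + y) = sc c x + sc c y) \<and>
     (\<forall>c d x. sc (c * d) x = sc c (sc d x)) \<and>
     (\<forall>c x. norm (sc c x) = cmod c * norm x)"

definition complex_banach_algebra ::
    "(complex \<Rightarrow> 'a::{real_normed_algebra,banach} \<Rightarrow> 'a) \<Rightarrow> bool" where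
  "complex_banach_algebra sc \<longleftrightarrow> complex_banach_space sc \<and>
     (\<forall>c a b. sc c (a * b) = sc c a * b \<and> sc c (a * b) = a * sc c b)"

definition banach_bimodule ::
    "(complex \<Rightarrow> 'a::{real_normed_algebra,banach} \<Rightarrow> 'a) \<Rightarrow> (complex \<Rightarrow> 'x::banach \<Rightarrow> 'x)
     \<Rightarrow> ('a \<Rightarrow> 'x \<Rightarrow> 'x) \<Rightarrow> ('x \<Rightarrow> 'a \<Rightarrow> 'x) \<Rightarrow> bool" where
  "banach_bimodule scA scX lm rm \<longleftrightarrow>
     (\<forall>a b x. lm (a + b) x = lm a x + lm b x) \<and>
     (\<forall>a x y. lm a (x + y) = lm a x + lm a y) \<and>
     (\<forall>c a x. lm (scA c a) x = scX c (lm a x) \<and> lm a (scX c x) = scX c (lm a x)) \<and>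
     (\<forall>a b x. rm x (a + b) = rm x a + rm x b) \<and>
     (\<forall>a x y. rm (x + y) a = rm x a + rm y a) \<and>
     (\<forall>c a x. rm x (scA c a) = scX c (rm x a) \<and> rm (scX c x) a = scX c (rm x a)) \<and>
     (\<exists>K. \<forall>a x. norm (lm a x) \<le> K * norm a * norm x) \<and>
     (\<exists>K. \<forall>a x. norm (rm x a) \<le> K * norm a * norm x) \<and>
     (\<forall>a b x. lm (a * b) x = lm a (lm b x)) \<and>
     (\<forall>a b x. rm x (a * b) = rm (rm x a) b) \<and>
     (\<forall>a b x. lm a (rm x b) = rm (lm a x) b)"

definition bdd_clinear ::
    "(complex \<Rightarrow> 'a::real_normed_vector \<Rightarrow> 'a) \<Rightarrow> (complex \<Rightarrow> 'x::real_normed_vector \<Rightarrow> 'x)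
     \<Rightarrow> ('a \<Rightarrow> 'x) \<Rightarrow> bool" where
  "bdd_clinear scA scX T \<longleftrightarrow>
     (\<forall>a b. T (a + b) = T a + T b) \<and> (\<forall>c a. T (scA c a) = scX c (T a)) \<and>
     (\<exists>K. \<forall>a. norm (T a) \<le> K * norm a)"

definition jordan_derivation ::
    "('a::ring \<Rightarrow> 'x \<Rightarrow> 'x::ab_group_add) \<Rightarrow> ('x \<Rightarrow> 'a \<Rightarrow> 'x) \<Rightarrow> ('a \<Rightarrow> 'x) \<Rightarrow> bool" where
  "jordan_derivation lm rm D \<longleftrightarrow>
     (\<forall>a b. D (a * b + b * a) = rm (D a) b + lm a (D b) + rm (D b) a + lm b (D a))"

definition is_derivation ::
    "('a::ring \<Rightarrow> 'x \<Rightarrow> 'x::ab_group_add) \<Rightarrow> ('x \<Rightarrow> 'a \<Rightarrow> 'x) \<Rightarrow> ('a \<Rightarrow> 'x) \<Rightarrow> bool" where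
  "is_derivation lm rm D \<longleftrightarrow> (\<forall>a b. D (a * b) = rm (D a) b + lm a (D b))"

section \<open>The unitization U# = U \<oplus> C with the l1-norm\<close>

definition unorm :: "'a::real_normed_vector \<times> complex \<Rightarrow> real" where
  "unorm u = norm (fst u) + cmod (snd u)"

definition umult :: "(complex \<Rightarrow> 'a::ring \<Rightarrow> 'a) \<Rightarrow> 'a \<times> complex \<Rightarrow> 'a \<times> complex \<Rightarrow> 'a \<times> complex" where
  "umult sc u v = (fst u * fst v + sc (snd u) (fst v) + sc (snd v) (fst u), snd u * snd v)"

definition uscale :: "(complex \<Rightarrow> 'a \<Rightarrow> 'a) \<Rightarrow> complex \<Rightarrow> 'a \<times> complex \<Rightarrow> 'a \<times> complex" where
  "uscale sc k u = (sc k (fst u), k * snd u)"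

definition uact :: "('a \<Rightarrow> 'x \<Rightarrow> 'x::plus) \<Rightarrow> (complex \<Rightarrow> 'x \<Rightarrow> 'x) \<Rightarrow> 'a \<times> complex \<Rightarrow> 'x \<Rightarrow> 'x" where
  "uact lm scX u x = lm (fst u) x + scX (snd u) x"

definition uract :: "('x \<Rightarrow> 'a \<Rightarrow> 'x::plus) \<Rightarrow> (complex \<Rightarrow> 'x \<Rightarrow> 'x) \<Rightarrow> 'x \<Rightarrow> 'a \<times> complex \<Rightarrow> 'x" where
  "uract rm scX x u = rm x (fst u) + scX (snd u) x"

text \<open>An element of the completed projective tensor product is represented by a sequence
r of pairs (b_n, c_n) with sum of unorm b_n * unorm c_n finite, standing for
sum_n b_n \<otimes> c_n. Two representations denote the same element iff every bounded
complex-bilinear form on U# \<times> U# takes the same value on them (the dual of the projective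
tensor product is the space of bounded bilinear forms).\<close>

type_synonym 'a ptrep = "nat \<Rightarrow> ('a \<times> complex) \<times> ('a \<times> complex)"

definition cbilform :: "(complex \<Rightarrow> 'a::real_normed_vector \<Rightarrow> 'a)
     \<Rightarrow> ('a \<times> complex \<Rightarrow> 'a \<times> complex \<Rightarrow> complex) \<Rightarrow> bool" where
  "cbilform sc \<phi> \<longleftrightarrow>
     (\<forall>u v w. \<phi> (u + v) w = \<phi> u w + \<phi> v w) \<and>
     (\<forall>u v w. \<phi> u (v + w) = \<phi> u v + \<phi> u w) \<and>
     (\<forall>k u v. \<phi> (uscale sc k u) v = k * \<phi> u v \<and> \<phi> u (uscale sc k v) = k * \<phi> u v) \<and>
     (\<exists>K. \<forall>u v. cmod (\<phi> u v) \<le> K * unorm u * unorm v)"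

definition is_ptrep :: "'a::real_normed_vector ptrep \<Rightarrow> bool" where
  "is_ptrep r \<longleftrightarrow> summable (\<lambda>n. unorm (fst (r n)) * unorm (snd (r n)))"

definition ptequiv :: "(complex \<Rightarrow> 'a::real_normed_vector \<Rightarrow> 'a) \<Rightarrow> 'a ptrep \<Rightarrow> 'a ptrep \<Rightarrow> bool" where
  "ptequiv sc r s \<longleftrightarrow> (\<forall>\<phi>. cbilform sc \<phi> \<longrightarrow>
      (\<Sum>n. \<phi> (fst (r n)) (snd (r n))) = (\<Sum>n. \<phi> (fst (s n)) (snd (s n))))"

definition ptnorm :: "(complex \<Rightarrow> 'a::real_normed_vector \<Rightarrow> 'a) \<Rightarrow> 'a ptrep \<Rightarrow> real" where
  "ptnorm sc r = Inf {(\<Sum>n. unorm (fst (s n)) * unorm (snd (s n))) | s. is_ptrep s \<and> ptequiv sc r s}"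

definition ptflip :: "'a ptrep \<Rightarrow> 'a ptrep" where
  "ptflip r = (\<lambda>n. prod.swap (r n))"

definition ptlmult :: "(complex \<Rightarrow> 'a::ring \<Rightarrow> 'a) \<Rightarrow> 'a \<times> complex \<Rightarrow> 'a ptrep \<Rightarrow> 'a ptrep" where
  "ptlmult sc u r = (\<lambda>n. (umult sc u (fst (r n)), snd (r n)))"

definition ptrmult :: "(complex \<Rightarrow> 'a::ring \<Rightarrow> 'a) \<Rightarrow> 'a ptrep \<Rightarrow> 'a \<times> complex \<Rightarrow> 'a ptrep" where
  "ptrmult sc r u = (\<lambda>n. (fst (r n), umult sc (snd (r n)) u))"

definition ptdiff :: "'a::ab_group_add ptrep \<Rightarrow> 'a ptrep \<Rightarrow> 'a ptrep" where
  "ptdiff r s = (\<lambda>n. if even n then r (n div 2) else (- fst (s (n div 2)), snd (s (n div 2))))"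

definition ptpi :: "(complex \<Rightarrow> 'a::{real_normed_algebra,banach} \<Rightarrow> 'a) \<Rightarrow> 'a ptrep \<Rightarrow> 'a \<times> complex" where
  "ptpi sc r = (\<Sum>n. umult sc (fst (r n)) (snd (r n)))"

text \<open>psi_x (a \<otimes> b) = a x b  and  Phi_T (a \<otimes> b) = a T(b), with T(1) = 0\<close>

definition ppsi :: "('a \<Rightarrow> 'x \<Rightarrow> 'x::banach) \<Rightarrow> ('x \<Rightarrow> 'a \<Rightarrow> 'x) \<Rightarrow> (complex \<Rightarrow> 'x \<Rightarrow> 'x)
     \<Rightarrow> 'x \<Rightarrow> 'a ptrep \<Rightarrow> 'x" where
  "ppsi lm rm scX x r = (\<Sum>n. uract rm scX (uact lm scX (fst (r n)) x) (snd (r n)))"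

definition pPhi :: "('a \<Rightarrow> 'x \<Rightarrow> 'x::banach) \<Rightarrow> (complex \<Rightarrow> 'x \<Rightarrow> 'x)
     \<Rightarrow> ('a \<Rightarrow> 'x) \<Rightarrow> 'a ptrep \<Rightarrow> 'x" where
  "pPhi lm scX T r = (\<Sum>n. uact lm scX (fst (r n)) (T (fst (snd (r n)))))"

definition directed_set :: "'l set \<Rightarrow> ('l \<Rightarrow> 'l \<Rightarrow> bool) \<Rightarrow> bool" where
  "directed_set \<Lambda> le \<longleftrightarrow> \<Lambda> \<noteq> {} \<and> (\<forall>i\<in>\<Lambda>. le i i) \<and>
     (\<forall>i\<in>\<Lambda>. \<forall>j\<in>\<Lambda>. \<forall>k\<in>\<Lambda>. le i j \<longrightarrow> le j k \<longrightarrow> le i k) \<and>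
     (\<forall>i\<in>\<Lambda>. \<forall>j\<in>\<Lambda>. \<exists>k\<in>\<Lambda>. le i k \<and> le j k)"

definition net_to_0 :: "'l set \<Rightarrow> ('l \<Rightarrow> 'l \<Rightarrow> bool) \<Rightarrow> ('l \<Rightarrow> real) \<Rightarrow> bool" where
  "net_to_0 \<Lambda> le f \<longleftrightarrow> (\<forall>e>0. \<exists>i0\<in>\<Lambda>. \<forall>i\<in>\<Lambda>. le i0 i \<longrightarrow> \<bar>f i\<bar> < e)"

definition net_bounded :: "'l set \<Rightarrow> ('l \<Rightarrow> 'x::real_normed_vector) \<Rightarrow> bool" where
  "net_bounded \<Lambda> y \<longleftrightarrow> (\<exists>B. \<forall>i\<in>\<Lambda>. norm (y i) \<le> B)"

definition sym_approx_diagonal ::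
    "(complex \<Rightarrow> 'a::{real_normed_algebra,banach} \<Rightarrow> 'a) \<Rightarrow> 'l set \<Rightarrow> ('l \<Rightarrow> 'l \<Rightarrow> bool)
     \<Rightarrow> ('l \<Rightarrow> 'a ptrep) \<Rightarrow> bool" where
  "sym_approx_diagonal sc \<Lambda> le t \<longleftrightarrow> directed_set \<Lambda> le \<and>
     (\<forall>i\<in>\<Lambda>. is_ptrep (t i) \<and> ptequiv sc (ptflip (t i)) (t i)) \<and>
     (\<forall>u. net_to_0 \<Lambda> le (\<lambda>i. ptnorm sc (ptdiff (ptlmult sc u (t i)) (ptrmult sc (t i) u)))) \<and>
     (\<forall>u. net_to_0 \<Lambda> le (\<lambda>i. unorm (umult sc (ptpi sc (t i)) u - u)))"

end

theory Submission
  imports Defs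
begin

definition hbgood :: "'x::real_normed_vector \<Rightarrow> ('x \<times> real) set \<Rightarrow> bool" where
  "hbgood z G \<longleftrightarrow> (z, norm z) \<in> G \<and>
     (\<forall>x a y b. (x,a) \<in> G \<longrightarrow> (y,b) \<in> G \<longrightarrow> (x+y, a+b) \<in> G) \<and>
     (\<forall>x a c. (x,a) \<in> G \<longrightarrow> (c *\<^sub>R x, c*a) \<in> G) \<and>
     (\<forall>x a. (x,a) \<in> G \<longrightarrow> a \<le> norm x)"

lemma hbgood_unique:
  assumes "hbgood z G" "(x,a) \<in> G" "(x,b) \<in> G" shows "a = b"
proof -
  have "(x + (-1) *\<^sub>R x, a + (-1)*b) \<in> G" using assms unfolding hbgood_def by blast
  hence "a - b \<le> 0" using assms(1) unfolding hbgood_def by fastforce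
  moreover have "(x + (-1) *\<^sub>R x, b + (-1)*a) \<in> G" using assms unfolding hbgood_def by blast
  hence "b - a \<le> 0" using assms(1) unfolding hbgood_def by fastforce
  ultimately show ?thesis by simp
qed

lemma hbgood_extend:
  assumes g: "hbgood z G" and y: "\<forall>a. (y,a) \<notin> G"
  shows "\<exists>G'. hbgood z G' \<and> G \<subseteq> G' \<and> G' \<noteq> G"
proof -
  let ?L = "{a - norm (x - y) | x a. (x,a) \<in> G}"
  have G0: "(0,0) \<in> G" using g unfolding hbgood_def
    by (metis mult_zero_left scale_zero_left)
  have ub: "l \<le> norm (x' + y) - a'" if lL: "l \<in> ?L" and xa': "(x',a') \<in> G" for l x' a'
  proof -
    obtain x a where l: "l = a - norm (x - y)" "(x,a) \<in> G" using lL by blast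
    have "(x + x', a + a') \<in> G" using g l xa' unfolding hbgood_def by blast
    hence "a + a' \<le> norm (x + x')" using g unfolding hbgood_def by blast
    also have "\<dots> \<le> norm (x - y) + norm (x' + y)"
      using norm_triangle_ineq[of "x - y" "x' + y"] by simp
    finally show ?thesis using l by simp
  qed
  have ne: "?L \<noteq> {}" using G0 by blast
  define c where "c = Sup ?L"
  have bdd: "bdd_above ?L" using ub G0 unfolding bdd_above_def by blast
  have c1: "a - norm (x - y) \<le> c" if "(x,a) \<in> G" for x a
    unfolding c_def using bdd that by (intro cSup_upper) auto
  have c2: "c \<le> norm (x' + y) - a'" if "(x',a') \<in> G" for x' a'
    unfolding c_def using ne that ub by (intro cSup_least) auto
  define G' where "G' = {(x + s *\<^sub>R y, a + s * c) | x a s. (x,a) \<in> G}"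
  have sub: "G \<subseteq> G'" unfolding G'_def by force
  have new: "(y, c) \<in> G'" unfolding G'_def using G0 by force
  have bound: "a + s * c \<le> norm (x + s *\<^sub>R y)" if "(x,a) \<in> G" for x a s
  proof (cases "s > 0")
    case True
    have "((1/s) *\<^sub>R x, (1/s) * a) \<in> G" using g that unfolding hbgood_def by blast
    from c2[OF this] have "c \<le> norm ((1/s) *\<^sub>R x + y) - (1/s)*a" .
    hence "s * c \<le> s * norm ((1/s) *\<^sub>R x + y) - a" using True
      by (simp add: field_simps)
    also have "s * norm ((1/s) *\<^sub>R x + y) = norm (x + s *\<^sub>R y)"
    proof -
      have "s * norm ((1/s) *\<^sub>R x + y) = norm (s *\<^sub>R ((1/s) *\<^sub>R x + y))" using True by simp
      also have "s *\<^sub>R ((1/s) *\<^sub>R x + y) = x + s *\<^sub>R y" using True by (simp add: scaleR_add_right)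
      finally show ?thesis .
    qed
    finally show ?thesis by simp
  next
    case False
    show ?thesis
    proof (cases "s = 0")
      case True thus ?thesis using g that unfolding hbgood_def by auto
    next
      case False
      hence sn: "s < 0" using \<open>\<not> s > 0\<close> by simp
      define r where "r = - s"
      have r: "r > 0" using sn r_def by simp
      have "((1/r) *\<^sub>R x, (1/r) * a) \<in> G" using g that unfolding hbgood_def by blast
      from c1[OF this] have "(1/r)*a - norm ((1/r) *\<^sub>R x - y) \<le> c" .
      hence "a - r * norm ((1/r) *\<^sub>R x - y) \<le> r * c" using r
        by (simp add: field_simps)
      also have "r * norm ((1/r) *\<^sub>R x - y) = norm (x + s *\<^sub>R y)"
      proof -
        have "r * norm ((1/r) *\<^sub>R x - y) = norm (r *\<^sub>R ((1/r) *\<^sub>R x - y))" using r by simp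
        also have "r *\<^sub>R ((1/r) *\<^sub>R x - y) = x + s *\<^sub>R y" using r r_def by (simp add: scaleR_diff_right)
        finally show ?thesis .
      qed
      finally show ?thesis using r_def by simp
    qed
  qed
  have "hbgood z G'"
    unfolding hbgood_def
  proof (intro conjI allI impI)
    show "(z, norm z) \<in> G'" using sub g unfolding hbgood_def by blast
  next
    fix x a x' a' assume "(x,a) \<in> G'" "(x',a') \<in> G'"
    then obtain x1 a1 s1 x2 a2 s2 where h: "x = x1 + s1 *\<^sub>R y" "a = a1 + s1 * c" "(x1,a1) \<in> G"
      "x' = x2 + s2 *\<^sub>R y" "a' = a2 + s2 * c" "(x2,a2) \<in> G" unfolding G'_def by blast
    have "(x1 + x2, a1 + a2) \<in> G" using g h unfolding hbgood_def by blast
    moreover have "x + x' = (x1 + x2) + (s1 + s2) *\<^sub>R y" "a + a' = (a1 + a2) + (s1+s2) * c"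
      using h by (auto simp: algebra_simps)
    ultimately show "(x + x', a + a') \<in> G'" unfolding G'_def by blast
  next
    fix x a k assume "(x,a) \<in> G'"
    then obtain x1 a1 s1 where h: "x = x1 + s1 *\<^sub>R y" "a = a1 + s1 * c" "(x1,a1) \<in> G"
      unfolding G'_def by blast
    have "(k *\<^sub>R x1, k * a1) \<in> G" using g h unfolding hbgood_def by blast
    moreover have "k *\<^sub>R x = k *\<^sub>R x1 + (k * s1) *\<^sub>R y" "k * a = k * a1 + (k * s1) * c"
      using h by (auto simp: algebra_simps)
    ultimately show "(k *\<^sub>R x, k * a) \<in> G'" unfolding G'_def by blast
  next
    fix x a assume "(x,a) \<in> G'"
    then obtain x1 a1 s1 where h: "x = x1 + s1 *\<^sub>R y" "a = a1 + s1 * c" "(x1,a1) \<in> G"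
      unfolding G'_def by blast
    show "a \<le> norm x" using bound[OF h(3)] h by simp
  qed
  moreover have "G' \<noteq> G" using new y by blast
  ultimately show ?thesis using sub by blast
qed

lemma hb_sep:
  fixes z :: "'x::real_normed_vector"
  assumes "z \<noteq> 0"
  shows "\<exists>f::'x \<Rightarrow> real. bounded_linear f \<and> f z \<noteq> 0"
proof -
  let ?A = "{G. hbgood z G}"
  define S0 where "S0 = {(s *\<^sub>R z, s * norm z) | s. True}"
  have G0: "S0 \<in> ?A"
    unfolding hbgood_def mem_Collect_eq S0_def[symmetric]
  proof (intro conjI allI impI)
    show "(z, norm z) \<in> S0" unfolding S0_def by (auto intro!: exI[of _ 1])
  next
    fix x a y b assume "(x,a) \<in> S0" "(y,b) \<in> S0" note this[unfolded S0_def]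
    then obtain s1 s2 where "x = s1 *\<^sub>R z" "a = s1 * norm z" "y = s2 *\<^sub>R z" "b = s2 * norm z" by blast
    thus "(x+y, a+b) \<in> S0" unfolding S0_def
      by (intro CollectI exI[of _ "s1+s2"]) (simp add: algebra_simps)
  next
    fix x a k assume "(x,a) \<in> S0" note this[unfolded S0_def]
    then obtain s1 where "x = s1 *\<^sub>R z" "a = s1 * norm z" by blast
    thus "(k *\<^sub>R x, k*a) \<in> S0" unfolding S0_def
      by (intro CollectI exI[of _ "k * s1"]) (simp add: algebra_simps)
  next
    fix x a assume "(x,a) \<in> S0" note this[unfolded S0_def]
    then obtain s1 where "x = s1 *\<^sub>R z" "a = s1 * norm z" by blast
    thus "a \<le> norm x" by (simp add: abs_ge_self mult_right_mono)
  qed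
  have "\<forall>C\<in>chains ?A. \<exists>U\<in>?A. \<forall>X\<in>C. X \<subseteq> U"
  proof
    fix C assume C: "C \<in> chains ?A"
    show "\<exists>U\<in>?A. \<forall>X\<in>C. X \<subseteq> U"
    proof (cases "C = {}")
      case True thus ?thesis using G0 by blast
    next
      case False
      have Cg: "\<And>G. G \<in> C \<Longrightarrow> hbgood z G" using C unfolding chains_def by blast
      have ch: "\<And>G H. G \<in> C \<Longrightarrow> H \<in> C \<Longrightarrow> G \<subseteq> H \<or> H \<subseteq> G"
        using C unfolding chains_def chain_subset_def by blast
      have "hbgood z (\<Union>C)"
        unfolding hbgood_def
      proof (intro conjI allI impI)
        obtain G where "G \<in> C" using False by blast
        thus "(z, norm z) \<in> \<Union>C" using Cg unfolding hbgood_def by blast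
      next
        fix x a y b assume "(x,a) \<in> \<Union>C" "(y,b) \<in> \<Union>C"
        then obtain G H where GH: "G \<in> C" "H \<in> C" "(x,a) \<in> G" "(y,b) \<in> H" by blast
        from ch[OF GH(1,2)] show "(x+y, a+b) \<in> \<Union>C"
        proof
          assume "G \<subseteq> H" thus ?thesis using GH Cg[OF GH(2)] unfolding hbgood_def by blast
        next
          assume "H \<subseteq> G" thus ?thesis using GH Cg[OF GH(1)] unfolding hbgood_def by blast
        qed
      next
        fix x a k assume "(x,a) \<in> \<Union>C"
        then obtain G where "G \<in> C" "(x,a) \<in> G" by blast
        thus "(k *\<^sub>R x, k*a) \<in> \<Union>C" using Cg unfolding hbgood_def by blast
      next
        fix x a assume "(x,a) \<in> \<Union>C"
        then obtain G where "G \<in> C" "(x,a) \<in> G" by blast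
        thus "a \<le> norm x" using Cg unfolding hbgood_def by blast
      qed
      thus ?thesis by blast
    qed
  qed
  from Zorn_Lemma2[OF this] obtain M where M: "hbgood z M" and max: "\<And>X. hbgood z X \<Longrightarrow> M \<subseteq> X \<Longrightarrow> X = M"
    by blast
  have tot: "\<exists>a. (x,a) \<in> M" for x
  proof (rule ccontr)
    assume "\<not> ?thesis"
    then obtain G' where "hbgood z G'" "M \<subseteq> G'" "G' \<noteq> M" using hbgood_extend[OF M, of x] by blast
    thus False using max by blast
  qed
  define f where "f x = (THE a. (x,a) \<in> M)" for x
  have fM: "(x, f x) \<in> M" for x
    unfolding f_def by (rule theI') (use tot hbgood_unique[OF M] in blast)
  have fe: "f x = a" if "(x,a) \<in> M" for x a using hbgood_unique[OF M fM that] .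
  have add: "f (x + y) = f x + f y" for x y
    using M fM unfolding hbgood_def by (intro fe) blast
  have scl: "f (c *\<^sub>R x) = c * f x" for c x
    using M fM unfolding hbgood_def by (intro fe) blast
  have le: "f x \<le> norm x" for x using M fM unfolding hbgood_def by blast
  have nb: "\<bar>f x\<bar> \<le> norm x" for x
  proof -
    have "f (-x) = - f x" using scl[of "-1" x] by simp
    thus ?thesis using le[of x] le[of "-x"] by simp
  qed
  have "bounded_linear f"
    by (rule bounded_linear_intro[of f 1]) (use add scl nb in auto)
  moreover have "f z = norm z" using fe M unfolding hbgood_def by blast
  ultimately show ?thesis using assms by auto
qed

locale jctx =
  fixes scA :: "complex \<Rightarrow> 'a::{real_normed_algebra,banach} \<Rightarrow> 'a"
    and scX :: "complex \<Rightarrow> 'x::banach \<Rightarrow> 'x"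
    and lm :: "'a \<Rightarrow> 'x \<Rightarrow> 'x" and rm :: "'x \<Rightarrow> 'a \<Rightarrow> 'x"
  assumes cA: "complex_banach_algebra scA"
    and cX: "complex_banach_space scX"
    and bm: "banach_bimodule scA scX lm rm"
begin

lemma sA_ofreal[simp]: "scA (complex_of_real r) a = r *\<^sub>R a"
  using cA unfolding complex_banach_algebra_def complex_banach_space_def by blast
lemma sA_addc: "scA (c + d) a = scA c a + scA d a"
  using cA unfolding complex_banach_algebra_def complex_banach_space_def by blast
lemma sA_add[simp]: "scA c (a + b) = scA c a + scA c b"
  using cA unfolding complex_banach_algebra_def complex_banach_space_def by blast
lemma sA_mult: "scA (c * d) a = scA c (scA d a)"
  using cA unfolding complex_banach_algebra_def complex_banach_space_def by blast
lemma sA_norm: "norm (scA c a) = cmod c * norm a"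
  using cA unfolding complex_banach_algebra_def complex_banach_space_def by blast
lemma sA_ml[simp]: "scA c a * b = scA c (a * b)"
  using cA unfolding complex_banach_algebra_def by metis
lemma sA_mr[simp]: "a * scA c b = scA c (a * b)"
  using cA unfolding complex_banach_algebra_def by metis
lemma sA_0c[simp]: "scA 0 a = 0" using sA_ofreal[of 0 a] by simp
lemma sA_1c[simp]: "scA 1 a = a" using sA_ofreal[of 1 a] by simp
lemma sA_0[simp]: "scA c 0 = 0" using sA_add[of c 0 0] by simp
lemma sA_minus[simp]: "scA c (- a) = - scA c a"
  using sA_add[of c a "-a"] by (simp add: add_eq_0_iff)
lemma sA_diff[simp]: "scA c (a - b) = scA c a - scA c b"
  using sA_add[of c a "-b"] by simp
lemma sA_scaleR[simp]: "scA c (r *\<^sub>R a) = r *\<^sub>R scA c a"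
  by (metis sA_mult sA_ofreal mult.commute)

lemma sX_ofreal[simp]: "scX (complex_of_real r) x = r *\<^sub>R x"
  using cX unfolding complex_banach_space_def by blast
lemma sX_addc: "scX (c + d) x = scX c x + scX d x"
  using cX unfolding complex_banach_space_def by blast
lemma sX_add[simp]: "scX c (x + y) = scX c x + scX c y"
  using cX unfolding complex_banach_space_def by blast
lemma sX_mult: "scX (c * d) x = scX c (scX d x)"
  using cX unfolding complex_banach_space_def by blast
lemma sX_norm: "norm (scX c x) = cmod c * norm x"
  using cX unfolding complex_banach_space_def by blast
lemma sX_0c[simp]: "scX 0 x = 0" using sX_ofreal[of 0 x] by simp
lemma sX_1c[simp]: "scX 1 x = x" using sX_ofreal[of 1 x] by simp
lemma sX_0[simp]: "scX c 0 = 0" using sX_add[of c 0 0] by simp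
lemma sX_minus[simp]: "scX c (- x) = - scX c x"
  using sX_add[of c x "-x"] by (simp add: add_eq_0_iff)
lemma sX_diff[simp]: "scX c (x - y) = scX c x - scX c y"
  using sX_add[of c x "-y"] by simp
lemma sX_scaleR[simp]: "scX c (r *\<^sub>R x) = r *\<^sub>R scX c x"
  by (metis sX_mult sX_ofreal mult.commute)
lemma sX_minusc: "scX (- c) x = - scX c x"
  using sX_addc[of c "-c" x] by (simp add: add_eq_0_iff)
lemma sA_minusc: "scA (- c) a = - scA c a"
  using sA_addc[of c "-c" a] by (simp add: add_eq_0_iff)

lemma lm_addl[simp]: "lm (a + b) x = lm a x + lm b x"
  using bm[unfolded banach_bimodule_def, THEN conjunct1] by blast
lemma lm_addr[simp]: "lm a (x + y) = lm a x + lm a y"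
  using bm[unfolded banach_bimodule_def, THEN conjunct2, THEN conjunct1] by blast
lemma lm_scl[simp]: "lm (scA c a) x = scX c (lm a x)"
  using bm[unfolded banach_bimodule_def, THEN conjunct2, THEN conjunct2, THEN conjunct1] by blast
lemma lm_scr[simp]: "lm a (scX c x) = scX c (lm a x)"
  using bm[unfolded banach_bimodule_def, THEN conjunct2, THEN conjunct2, THEN conjunct1] by blast
lemma rm_addr[simp]: "rm x (a + b) = rm x a + rm x b"
  using bm[unfolded banach_bimodule_def, THEN conjunct2, THEN conjunct2, THEN conjunct2, THEN conjunct1] by blast
lemma rm_addl[simp]: "rm (x + y) a = rm x a + rm y a"
  using bm[unfolded banach_bimodule_def, THEN conjunct2, THEN conjunct2, THEN conjunct2, THEN conjunct2, THEN conjunct1] by blast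
lemma rm_scr[simp]: "rm x (scA c a) = scX c (rm x a)"
  using bm[unfolded banach_bimodule_def, THEN conjunct2, THEN conjunct2, THEN conjunct2, THEN conjunct2, THEN conjunct2, THEN conjunct1] by blast
lemma rm_scl[simp]: "rm (scX c x) a = scX c (rm x a)"
  using bm[unfolded banach_bimodule_def, THEN conjunct2, THEN conjunct2, THEN conjunct2, THEN conjunct2, THEN conjunct2, THEN conjunct1] by blast
lemma lm_mult[simp]: "lm (a * b) x = lm a (lm b x)"
  using bm[unfolded banach_bimodule_def, THEN conjunct2, THEN conjunct2, THEN conjunct2, THEN conjunct2, THEN conjunct2, THEN conjunct2, THEN conjunct2, THEN conjunct2, THEN conjunct1] by blast
lemma rm_mult[simp]: "rm x (a * b) = rm (rm x a) b"
  using bm[unfolded banach_bimodule_def, THEN conjunct2, THEN conjunct2, THEN conjunct2, THEN conjunct2, THEN conjunct2, THEN conjunct2, THEN conjunct2, THEN conjunct2, THEN conjunct2, THEN conjunct1] by blast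
lemma lm_rm[simp]: "lm a (rm x b) = rm (lm a x) b"
  using bm[unfolded banach_bimodule_def, THEN conjunct2, THEN conjunct2, THEN conjunct2, THEN conjunct2, THEN conjunct2, THEN conjunct2, THEN conjunct2, THEN conjunct2, THEN conjunct2, THEN conjunct2] by blast
lemma lm_bound: "\<exists>K>0. \<forall>a x. norm (lm a x) \<le> K * norm a * norm x"
proof -
  obtain K where K: "\<forall>a x. norm (lm a x) \<le> K * norm a * norm x"
    using bm[unfolded banach_bimodule_def, THEN conjunct2, THEN conjunct2, THEN conjunct2, THEN conjunct2, THEN conjunct2, THEN conjunct2, THEN conjunct1] by blast
  have "\<forall>a x. norm (lm a x) \<le> (\<bar>K\<bar>+1) * norm a * norm x"
  proof (intro allI)
    fix a :: 'a and x :: 'x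
    have "K * norm a * norm x \<le> (\<bar>K\<bar>+1) * norm a * norm x"
      by (intro mult_right_mono) auto
    thus "norm (lm a x) \<le> (\<bar>K\<bar>+1) * norm a * norm x" using K by (meson order_trans)
  qed
  thus ?thesis by (intro exI[of _ "\<bar>K\<bar>+1"]) auto
qed
lemma rm_bound: "\<exists>K>0. \<forall>a x. norm (rm x a) \<le> K * norm a * norm x"
proof -
  obtain K where K: "\<forall>a x. norm (rm x a) \<le> K * norm a * norm x"
    using bm[unfolded banach_bimodule_def, THEN conjunct2, THEN conjunct2, THEN conjunct2, THEN conjunct2, THEN conjunct2, THEN conjunct2, THEN conjunct2, THEN conjunct1] by blast
  have "\<forall>a x. norm (rm x a) \<le> (\<bar>K\<bar>+1) * norm a * norm x"
  proof (intro allI)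
    fix a :: 'a and x :: 'x
    have "K * norm a * norm x \<le> (\<bar>K\<bar>+1) * norm a * norm x"
      by (intro mult_right_mono) auto
    thus "norm (rm x a) \<le> (\<bar>K\<bar>+1) * norm a * norm x" using K by (meson order_trans)
  qed
  thus ?thesis by (intro exI[of _ "\<bar>K\<bar>+1"]) auto
qed
lemma lm_0l[simp]: "lm 0 x = 0" using lm_addl[of 0 0 x] by simp
lemma lm_0r[simp]: "lm a 0 = 0" using lm_addr[of a 0 0] by simp
lemma rm_0l[simp]: "rm 0 a = 0" using rm_addl[of 0 0 a] by simp
lemma rm_0r[simp]: "rm x 0 = 0" using rm_addr[of x 0 0] by simp
lemma lm_minusl[simp]: "lm (- a) x = - lm a x" using lm_addl[of a "-a" x] by (simp add: add_eq_0_iff)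
lemma lm_minusr[simp]: "lm a (- x) = - lm a x" using lm_addr[of a x "-x"] by (simp add: add_eq_0_iff)
lemma rm_minusl[simp]: "rm (- x) a = - rm x a" using rm_addl[of x "-x" a] by (simp add: add_eq_0_iff)
lemma rm_minusr[simp]: "rm x (- a) = - rm x a" using rm_addr[of x a "-a"] by (simp add: add_eq_0_iff)
lemma lm_diffl[simp]: "lm (a - b) x = lm a x - lm b x" using lm_addl[of a "-b" x] by simp
lemma lm_diffr[simp]: "lm a (x - y) = lm a x - lm a y" using lm_addr[of a x "-y"] by simp
lemma rm_diffl[simp]: "rm (x - y) a = rm x a - rm y a" using rm_addl[of x "-y" a] by simp
lemma rm_diffr[simp]: "rm x (a - b) = rm x a - rm x b" using rm_addr[of x a "-b"] by simp
lemma lm_scaleRl[simp]: "lm (r *\<^sub>R a) x = r *\<^sub>R lm a x" by (metis lm_scl sA_ofreal sX_ofreal)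
lemma lm_scaleRr[simp]: "lm a (r *\<^sub>R x) = r *\<^sub>R lm a x" by (metis lm_scr sX_ofreal)
lemma rm_scaleRl[simp]: "rm (r *\<^sub>R x) a = r *\<^sub>R rm x a" by (metis rm_scl sX_ofreal)
lemma rm_scaleRr[simp]: "rm x (r *\<^sub>R a) = r *\<^sub>R rm x a" by (metis rm_scr sA_ofreal sX_ofreal)

end

context jctx begin

abbreviation mu where "mu \<equiv> umult scA"
abbreviation L where "L \<equiv> uact lm scX"
abbreviation Rt where "Rt \<equiv> uract rm scX"
abbreviation us where "us \<equiv> uscale scA"

lemma mu_simp: "mu (a, c) (b, d) = (a * b + scA c b + scA d a, c * d)"
  by (simp add: umult_def)
lemma L_simp: "L (a, c) x = lm a x + scX c x" by (simp add: uact_def)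
lemma Rt_simp: "Rt x (a, c) = rm x a + scX c x" by (simp add: uract_def)
lemma us_simp: "us k (a, c) = (scA k a, k * c)" by (simp add: uscale_def)
lemma unorm_simp: "unorm (a, c) = norm a + cmod c" by (simp add: unorm_def)

lemmas sA_mult' = sA_mult[symmetric]
lemmas sX_mult' = sX_mult[symmetric]

lemma mu_assoc: "mu (mu p q) r = mu p (mu q r)"
  by (cases p; cases q; cases r) (simp add: mu_simp sA_mult' sA_addc algebra_simps)
lemma mu_addl: "mu (p + q) r = mu p r + mu q r"
  by (cases p; cases q; cases r) (simp add: mu_simp sA_addc algebra_simps)
lemma mu_addr: "mu p (q + r) = mu p q + mu p r"
  by (cases p; cases q; cases r) (simp add: mu_simp sA_addc algebra_simps)
lemma mu_usl: "mu (us k p) q = us k (mu p q)"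
  by (cases p; cases q) (simp add: mu_simp us_simp sA_mult' algebra_simps)
lemma mu_usr: "mu p (us k q) = us k (mu p q)"
  by (cases p; cases q) (simp add: mu_simp us_simp sA_mult' algebra_simps)
lemma mu_one_r[simp]: "mu p (0,1) = p"
  by (cases p) (simp add: mu_simp)
lemma mu_one_l[simp]: "mu (0,1) p = p"
  by (cases p) (simp add: mu_simp)
lemma mu_0l[simp]: "mu 0 p = 0"
  by (cases p) (simp add: mu_simp zero_prod_def)
lemma mu_0r[simp]: "mu p 0 = 0"
  by (cases p) (simp add: mu_simp zero_prod_def)
lemma mu_minusl: "mu (- p) q = - mu p q"
proof -
  have "mu p q + mu (- p) q = 0" by (simp add: mu_addl[symmetric])
  thus ?thesis by (simp add: add_eq_0_iff)
qed
lemma mu_minusr: "mu p (- q) = - mu p q"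
proof -
  have "mu p q + mu p (- q) = 0" by (simp add: mu_addr[symmetric])
  thus ?thesis by (simp add: add_eq_0_iff)
qed
lemma mu_diffl: "mu (p - q) r = mu p r - mu q r"
  by (simp only: diff_conv_add_uminus mu_addl mu_minusl)
lemma mu_diffr: "mu p (q - r) = mu p q - mu p r"
  by (simp only: diff_conv_add_uminus mu_addr mu_minusr)
lemma mu_U: "mu (a, 0) (b, 0) = (a * b, 0)" by (simp add: mu_simp)

lemma unorm_nonneg: "unorm p \<ge> 0" by (simp add: unorm_def)
lemma unorm_add: "unorm (p + q) \<le> unorm p + unorm q"
  using norm_triangle_ineq[of "fst p" "fst q"] norm_triangle_ineq[of "snd p" "snd q"] by (simp add: unorm_def)
lemma unorm_minus[simp]: "unorm (- p) = unorm p"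
  by (cases p) (simp add: unorm_simp)
lemma unorm_us: "unorm (us k p) = cmod k * unorm p"
  by (cases p) (simp add: unorm_simp us_simp sA_norm norm_mult algebra_simps)
lemma unorm_mu: "unorm (mu p q) \<le> unorm p * unorm q"
proof (cases p; cases q)
  fix a c b d assume pq: "p = (a,c)" "q = (b,d)"
  have "norm (a * b + scA c b + scA d a) \<le> norm (a*b) + norm (scA c b) + norm (scA d a)"
    by (rule order_trans[OF norm_triangle_ineq]) (simp add: norm_triangle_ineq)
  also have "\<dots> \<le> norm a * norm b + cmod c * norm b + cmod d * norm a"
    using norm_mult_ineq[of a b] by (simp add: sA_norm)
  finally show ?thesis using pq by (simp add: unorm_simp mu_simp norm_mult algebra_simps)
qed
lemma norm_le_unorm: "norm p \<le> unorm p"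
  by (cases p) (simp add: unorm_simp norm_Pair_le)
lemma unorm_le_norm: "unorm p \<le> 2 * norm p"
  using norm_fst_le[of "fst p" "snd p"] norm_snd_le[of "snd p" "fst p"] by (simp add: unorm_def)

lemma L_addl: "L (p + q) x = L p x + L q x"
  by (cases p; cases q) (simp add: L_simp sX_addc algebra_simps)
lemma L_addr: "L p (x + y) = L p x + L p y"
  by (cases p) (simp add: L_simp algebra_simps)
lemma Rt_addl: "Rt (x + y) p = Rt x p + Rt y p"
  by (cases p) (simp add: Rt_simp algebra_simps)
lemma Rt_addr: "Rt x (p + q) = Rt x p + Rt x q"
  by (cases p; cases q) (simp add: Rt_simp sX_addc algebra_simps)
lemma L_mu: "L (mu p q) x = L p (L q x)"
  by (cases p; cases q) (simp add: L_simp mu_simp sX_mult' algebra_simps)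
lemma Rt_mu: "Rt x (mu p q) = Rt (Rt x p) q"
  by (cases p; cases q) (simp add: Rt_simp mu_simp sX_mult' algebra_simps)
lemma L_Rt: "L p (Rt x q) = Rt (L p x) q"
  by (cases p; cases q) (simp add: Rt_simp L_simp sX_mult' algebra_simps)
lemma L_us: "L (us k p) x = scX k (L p x)"
  by (cases p) (simp add: L_simp us_simp sX_mult')
lemma L_sc: "L p (scX k x) = scX k (L p x)"
  by (cases p) (simp add: L_simp sX_mult' mult.commute)
lemma Rt_us: "Rt x (us k p) = scX k (Rt x p)"
  by (cases p) (simp add: Rt_simp us_simp sX_mult')
lemma Rt_sc: "Rt (scX k x) p = scX k (Rt x p)"
  by (cases p) (simp add: Rt_simp sX_mult' mult.commute)
lemma L_one[simp]: "L (0,1) x = x" by (simp add: L_simp)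
lemma Rt_one[simp]: "Rt x (0,1) = x" by (simp add: Rt_simp)
lemma L_0l[simp]: "L 0 x = 0" by (simp add: uact_def)
lemma L_0r[simp]: "L p 0 = 0" by (simp add: uact_def)
lemma Rt_0l[simp]: "Rt 0 p = 0" by (simp add: uract_def)
lemma Rt_0r[simp]: "Rt x 0 = 0" by (simp add: uract_def)
lemma L_minusl: "L (- p) x = - L p x" by (cases p) (simp add: L_simp sX_minusc)
lemma L_minusr: "L p (- x) = - L p x" by (cases p) (simp add: L_simp)
lemma Rt_minusl: "Rt (- x) p = - Rt x p" by (cases p) (simp add: Rt_simp)
lemma Rt_minusr: "Rt x (- p) = - Rt x p" by (cases p) (simp add: Rt_simp sX_minusc)
lemma L_diffl: "L (p - q) x = L p x - L q x" by (simp only: diff_conv_add_uminus L_addl L_minusl)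
lemma L_diffr: "L p (x - y) = L p x - L p y" by (simp only: diff_conv_add_uminus L_addr L_minusr)
lemma Rt_diffl: "Rt (x - y) p = Rt x p - Rt y p" by (simp only: diff_conv_add_uminus Rt_addl Rt_minusl)
lemma Rt_diffr: "Rt x (p - q) = Rt x p - Rt x q" by (simp only: diff_conv_add_uminus Rt_addr Rt_minusr)
lemma L_scaleRr: "L p (r *\<^sub>R x) = r *\<^sub>R L p x" by (cases p) (simp add: L_simp scaleR_add_right)
lemma Rt_scaleRl: "Rt (r *\<^sub>R x) p = r *\<^sub>R Rt x p" by (cases p) (simp add: Rt_simp scaleR_add_right)
lemma L_scaleRl: "L (r *\<^sub>R p) x = r *\<^sub>R L p x"
  by (cases p) (simp add: L_simp scaleR_add_right scaleR_conv_of_real sX_mult)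
lemma Rt_scaleRr: "Rt x (r *\<^sub>R p) = r *\<^sub>R Rt x p"
  by (cases p) (simp add: Rt_simp scaleR_add_right scaleR_conv_of_real sX_mult)

lemma L_bound: "\<exists>K>0. \<forall>p x. norm (L p x) \<le> K * unorm p * norm x"
proof -
  obtain K where K: "K > 0" "\<forall>a x. norm (lm a x) \<le> K * norm a * norm x" using lm_bound by blast
  have "norm (L p x) \<le> (K + 1) * unorm p * norm x" for p x
  proof (cases p)
    fix a c assume p: "p = (a,c)"
    have "norm (L p x) \<le> norm (lm a x) + norm (scX c x)" using p by (simp add: L_simp norm_triangle_ineq)
    also have "\<dots> \<le> (K+1) * norm a * norm x + (K+1) * cmod c * norm x"
    proof (rule add_mono)
      have "K * norm a * norm x \<le> (K+1) * norm a * norm x"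
        by (intro mult_right_mono) auto
      thus "norm (lm a x) \<le> (K+1) * norm a * norm x" using K(2)[rule_format, of a x] by linarith
      have "cmod c * norm x \<le> (K+1) * cmod c * norm x" using K(1)
        by (simp add: algebra_simps)
      thus "norm (scX c x) \<le> (K+1) * cmod c * norm x" by (simp add: sX_norm)
    qed
    finally show ?thesis using p by (simp add: unorm_simp algebra_simps)
  qed
  thus ?thesis using K(1) by (intro exI[of _ "K+1"]) auto
qed
lemma Rt_bound: "\<exists>K>0. \<forall>p x. norm (Rt x p) \<le> K * unorm p * norm x"
proof -
  obtain K where K: "K > 0" "\<forall>a x. norm (rm x a) \<le> K * norm a * norm x" using rm_bound by blast
  have "norm (Rt x p) \<le> (K + 1) * unorm p * norm x" for p x
  proof (cases p)
    fix a c assume p: "p = (a,c)"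
    have "norm (Rt x p) \<le> norm (rm x a) + norm (scX c x)" using p by (simp add: Rt_simp norm_triangle_ineq)
    also have "\<dots> \<le> (K+1) * norm a * norm x + (K+1) * cmod c * norm x"
    proof (rule add_mono)
      have "K * norm a * norm x \<le> (K+1) * norm a * norm x"
        by (intro mult_right_mono) auto
      thus "norm (rm x a) \<le> (K+1) * norm a * norm x" using K(2)[rule_format, of x a] by linarith
      have "cmod c * norm x \<le> (K+1) * cmod c * norm x" using K(1)
        by (simp add: algebra_simps)
      thus "norm (scX c x) \<le> (K+1) * cmod c * norm x" by (simp add: sX_norm)
    qed
    finally show ?thesis using p by (simp add: unorm_simp algebra_simps)
  qed
  thus ?thesis using K(1) by (intro exI[of _ "K+1"]) auto
qed

end

lemma interleave_sums:
  fixes f g :: "nat \<Rightarrow> 'b::real_normed_vector"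
  assumes "f sums a" "g sums b"
  shows "(\<lambda>n. if even n then f (n div 2) else g (n div 2)) sums (a + b)"
proof -
  define h1 where "h1 n = (if even n then f (n div 2) else 0)" for n
  define h2 where "h2 n = (if even n then 0 else g (n div 2))" for n
  have "(\<lambda>n. h1 (2*n)) sums a" unfolding h1_def using assms(1) by simp
  moreover have "strict_mono (\<lambda>n::nat. 2*n)" by (rule strict_monoI) simp
  moreover have "\<And>n. n \<notin> range (\<lambda>n::nat. 2*n) \<Longrightarrow> h1 n = 0"
    unfolding h1_def by (auto elim!: evenE)
  ultimately have 1: "h1 sums a" using sums_mono_reindex by blast
  have "(\<lambda>n. h2 (2*n+1)) sums b" unfolding h2_def using assms(2) by simp
  moreover have "strict_mono (\<lambda>n::nat. 2*n+1)" by (rule strict_monoI) simp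
  moreover have "\<And>n. n \<notin> range (\<lambda>n::nat. 2*n+1) \<Longrightarrow> h2 n = 0"
    unfolding h2_def by (auto elim!: oddE)
  ultimately have 2: "h2 sums b" using sums_mono_reindex by blast
  have "(\<lambda>n. h1 n + h2 n) sums (a + b)" using sums_add[OF 1 2] .
  moreover have "(\<lambda>n. h1 n + h2 n) = (\<lambda>n. if even n then f (n div 2) else g (n div 2))"
    unfolding h1_def h2_def by auto
  ultimately show ?thesis by simp
qed

context jctx begin

definition bb :: "('a \<times> complex \<Rightarrow> 'a \<times> complex \<Rightarrow> 'x) \<Rightarrow> bool" where
  "bb B \<longleftrightarrow> (\<forall>p q r. B (p + q) r = B p r + B q r) \<and> (\<forall>p q r. B p (q + r) = B p q + B p r) \<and>
     (\<forall>k p q. B (us k p) q = scX k (B p q)) \<and> (\<forall>k p q. B p (us k q) = scX k (B p q)) \<and>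
     (\<exists>K. \<forall>p q. norm (B p q) \<le> K * unorm p * unorm q)"

definition bsum :: "('a \<times> complex \<Rightarrow> 'a \<times> complex \<Rightarrow> 'x) \<Rightarrow> 'a ptrep \<Rightarrow> 'x" where
  "bsum B r = (\<Sum>n. B (fst (r n)) (snd (r n)))"

definition ulin :: "('a \<times> complex \<Rightarrow> 'x) \<Rightarrow> bool" where
  "ulin F \<longleftrightarrow> (\<forall>p q. F (p + q) = F p + F q) \<and> (\<forall>k p. F (us k p) = scX k (F p)) \<and>
     (\<exists>K. \<forall>p. norm (F p) \<le> K * unorm p)"

definition xlin :: "('x \<Rightarrow> 'x) \<Rightarrow> bool" where
  "xlin F \<longleftrightarrow> (\<forall>x y. F (x + y) = F x + F y) \<and> (\<forall>k x. F (scX k x) = scX k (F x)) \<and>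
     (\<exists>K. \<forall>x. norm (F x) \<le> K * norm x)"

lemma bbD:
  assumes "bb B"
  shows "B (p + q) r = B p r + B q r" "B p (q + r) = B p q + B p r"
    "B (us k p) q = scX k (B p q)" "B p (us k q) = scX k (B p q)"
  using assms unfolding bb_def by blast+

lemma bb_bound: assumes "bb B" shows "\<exists>K>0. \<forall>p q. norm (B p q) \<le> K * unorm p * unorm q"
proof -
  obtain K where K: "\<forall>p q. norm (B p q) \<le> K * unorm p * unorm q" using assms unfolding bb_def by blast
  have "norm (B p q) \<le> (\<bar>K\<bar>+1) * unorm p * unorm q" for p q
  proof -
    have "K * unorm p * unorm q \<le> (\<bar>K\<bar>+1) * unorm p * unorm q"
      using unorm_nonneg[of p] unorm_nonneg[of q]
      by (intro mult_right_mono) auto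
    thus ?thesis using K by (meson order_trans)
  qed
  thus ?thesis by (intro exI[of _ "\<bar>K\<bar>+1"]) auto
qed

lemma bb_0l: assumes "bb B" shows "B 0 q = 0"
  using bbD(1)[OF assms, of 0 0 q] by simp
lemma bb_0r: assumes "bb B" shows "B p 0 = 0"
  using bbD(2)[OF assms, of p 0 0] by simp
lemma bb_minusl: assumes "bb B" shows "B (- p) q = - B p q"
  using bbD(1)[OF assms, of p "-p" q] bb_0l[OF assms] by (simp add: add_eq_0_iff)
lemma bb_minusr: assumes "bb B" shows "B p (- q) = - B p q"
  using bbD(2)[OF assms, of p q "-q"] bb_0r[OF assms] by (simp add: add_eq_0_iff)

lemma bb_intro:
  assumes "\<And>p q r. B (p + q) r = B p r + B q r" "\<And>p q r. B p (q + r) = B p q + B p r"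
    "\<And>k p q. B (us k p) q = scX k (B p q)" "\<And>k p q. B p (us k q) = scX k (B p q)"
    "\<And>p q. norm (B p q) \<le> K * unorm p * unorm q"
  shows "bb B"
  unfolding bb_def using assms by blast

lemma xlinD: assumes "xlin F"
  shows "F (x + y) = F x + F y" "F (scX k x) = scX k (F x)"
  using assms unfolding xlin_def by blast+

lemma xlin_bound: assumes "xlin F" shows "\<exists>K>0. \<forall>x. norm (F x) \<le> K * norm x"
proof -
  obtain K where K: "\<forall>x. norm (F x) \<le> K * norm x" using assms unfolding xlin_def by blast
  have "norm (F x) \<le> (\<bar>K\<bar>+1) * norm x" for x
    using K[rule_format, of x] by (smt (verit) mult_right_mono norm_ge_zero)
  thus ?thesis by (intro exI[of _ "\<bar>K\<bar>+1"]) auto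
qed

lemma ulinD: assumes "ulin F"
  shows "F (p + q) = F p + F q" "F (us k p) = scX k (F p)"
  using assms unfolding ulin_def by blast+

lemma ulin_bound: assumes "ulin F" shows "\<exists>K>0. \<forall>p. norm (F p) \<le> K * unorm p"
proof -
  obtain K where K: "\<forall>p. norm (F p) \<le> K * unorm p" using assms unfolding ulin_def by blast
  have "norm (F p) \<le> (\<bar>K\<bar>+1) * unorm p" for p
    using K[rule_format, of p] unorm_nonneg[of p] by (smt (verit) mult_right_mono)
  thus ?thesis by (intro exI[of _ "\<bar>K\<bar>+1"]) auto
qed

lemma xlin_bl: assumes "xlin F" shows "bounded_linear F"
proof -
  obtain K where K: "\<forall>x. norm (F x) \<le> K * norm x" using assms unfolding xlin_def by blast
  show ?thesis
  proof (rule bounded_linear_intro[of F K])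
    show "F (x + y) = F x + F y" for x y using xlinD[OF assms] by blast
    show "F (r *\<^sub>R x) = r *\<^sub>R F x" for r x
      using xlinD(2)[OF assms, of "complex_of_real r" x] by simp
    show "norm (F x) \<le> norm x * K" for x using K by (simp add: mult.commute)
  qed
qed

lemma bb_add: assumes "bb B1" "bb B2" shows "bb (\<lambda>p q. B1 p q + B2 p q)"
proof -
  obtain K1 where K1: "\<forall>p q. norm (B1 p q) \<le> K1 * unorm p * unorm q" using bb_bound[OF assms(1)] by blast
  obtain K2 where K2: "\<forall>p q. norm (B2 p q) \<le> K2 * unorm p * unorm q" using bb_bound[OF assms(2)] by blast
  show ?thesis
  proof (rule bb_intro[where K="K1+K2"])
    show "norm (B1 p q + B2 p q) \<le> (K1+K2) * unorm p * unorm q" for p q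
      using norm_triangle_ineq[of "B1 p q" "B2 p q"] K1[rule_format, of p q] K2[rule_format, of p q]
      by (simp add: algebra_simps)
  qed (simp_all add: bbD[OF assms(1)] bbD[OF assms(2)] algebra_simps)
qed

lemma bb_xlin: assumes "xlin F" "bb B" shows "bb (\<lambda>p q. F (B p q))"
proof -
  obtain K1 where K1: "K1 > 0" "\<forall>x. norm (F x) \<le> K1 * norm x" using xlin_bound[OF assms(1)] by blast
  obtain K2 where K2: "\<forall>p q. norm (B p q) \<le> K2 * unorm p * unorm q" using bb_bound[OF assms(2)] by blast
  show ?thesis
  proof (rule bb_intro[where K="K1*K2"])
    show "norm (F (B p q)) \<le> (K1*K2) * unorm p * unorm q" for p q
    proof -
      have "norm (F (B p q)) \<le> K1 * norm (B p q)" using K1 by blast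
      also have "\<dots> \<le> K1 * (K2 * unorm p * unorm q)" using K1(1) K2[rule_format, of p q] by (intro mult_left_mono) auto
      finally show ?thesis by (simp add: algebra_simps)
    qed
  qed (simp_all add: bbD[OF assms(2)] xlinD[OF assms(1)])
qed

lemma xlin_minus: "xlin (\<lambda>x. - x)"
  unfolding xlin_def by (auto intro!: exI[of _ 1])
lemma xlin_scaleR: "xlin (\<lambda>x. c *\<^sub>R x)"
  unfolding xlin_def by (auto simp: scaleR_add_right intro!: exI[of _ "\<bar>c\<bar>"])
lemma xlin_L: "xlin (L a)"
proof -
  obtain K where K: "K > 0" "\<forall>p x. norm (L p x) \<le> K * unorm p * norm x" using L_bound by blast
  have "norm (L a x) \<le> (K * unorm a) * norm x" for x using K(2) by blast
  thus ?thesis unfolding xlin_def by (auto simp: L_addr L_sc)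
qed
lemma xlin_Rt: "xlin (\<lambda>x. Rt x a)"
proof -
  obtain K where K: "K > 0" "\<forall>p x. norm (Rt x p) \<le> K * unorm p * norm x" using Rt_bound by blast
  have "norm (Rt x a) \<le> (K * unorm a) * norm x" for x using K(2) by blast
  thus ?thesis unfolding xlin_def by (auto simp: Rt_addl Rt_sc)
qed

lemma bb_minus: assumes "bb B" shows "bb (\<lambda>p q. - B p q)"
  using bb_xlin[OF xlin_minus assms] .
lemma bb_diff: assumes "bb B1" "bb B2" shows "bb (\<lambda>p q. B1 p q - B2 p q)"
  using bb_add[OF assms(1) bb_minus[OF assms(2)]] by simp

lemma bb_flip: assumes "bb B" shows "bb (\<lambda>p q. B q p)"
proof -
  obtain K where K: "\<forall>p q. norm (B p q) \<le> K * unorm p * unorm q" using bb_bound[OF assms] by blast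
  have "norm (B q p) \<le> K * unorm p * unorm q" for p q using K[rule_format, of q p] by (simp add: algebra_simps)
  thus ?thesis
    by (intro bb_intro[where K=K]) (simp_all add: bbD[OF assms])
qed

lemma bb_lmul: assumes "bb B" shows "bb (\<lambda>p q. B (mu a p) q)"
proof -
  obtain K where K: "K > 0" "\<forall>p q. norm (B p q) \<le> K * unorm p * unorm q" using bb_bound[OF assms] by blast
  show ?thesis
  proof (rule bb_intro[where K="K * unorm a"])
    show "norm (B (mu a p) q) \<le> (K * unorm a) * unorm p * unorm q" for p q
    proof -
      have "norm (B (mu a p) q) \<le> K * unorm (mu a p) * unorm q" using K by blast
      also have "\<dots> \<le> K * (unorm a * unorm p) * unorm q"
        using K(1) unorm_mu[of a p] unorm_nonneg[of q] by (intro mult_right_mono mult_left_mono) auto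
      finally show ?thesis by (simp add: algebra_simps)
    qed
  qed (simp_all add: bbD[OF assms] mu_addr mu_usr)
qed

lemma bb_lmul2: assumes "bb B" shows "bb (\<lambda>p q. B (mu p a) q)"
proof -
  obtain K where K: "K > 0" "\<forall>p q. norm (B p q) \<le> K * unorm p * unorm q" using bb_bound[OF assms] by blast
  show ?thesis
  proof (rule bb_intro[where K="K * unorm a"])
    show "norm (B (mu p a) q) \<le> (K * unorm a) * unorm p * unorm q" for p q
    proof -
      have "norm (B (mu p a) q) \<le> K * unorm (mu p a) * unorm q" using K by blast
      also have "\<dots> \<le> K * (unorm p * unorm a) * unorm q"
        using K(1) unorm_mu[of p a] unorm_nonneg[of q] by (intro mult_right_mono mult_left_mono) auto
      finally show ?thesis by (simp add: algebra_simps)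
    qed
  qed (simp_all add: bbD[OF assms] mu_addl mu_usl)
qed

lemma bb_rmul: assumes "bb B" shows "bb (\<lambda>p q. B p (mu q a))"
  using bb_flip[OF bb_lmul2[OF bb_flip[OF assms], of a]] by simp
lemma bb_rmul2: assumes "bb B" shows "bb (\<lambda>p q. B p (mu a q))"
  using bb_flip[OF bb_lmul[OF bb_flip[OF assms], of a]] by simp

lemma bb_L: assumes "ulin F" shows "bb (\<lambda>p q. L p (F q))"
proof -
  obtain K1 where K1: "K1 > 0" "\<forall>p x. norm (L p x) \<le> K1 * unorm p * norm x" using L_bound by blast
  obtain K2 where K2: "K2 > 0" "\<forall>p. norm (F p) \<le> K2 * unorm p" using ulin_bound[OF assms] by blast
  show ?thesis
  proof (rule bb_intro[where K="K1*K2"])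
    show "norm (L p (F q)) \<le> (K1*K2) * unorm p * unorm q" for p q
    proof -
      have "norm (L p (F q)) \<le> K1 * unorm p * norm (F q)" using K1 by blast
      also have "\<dots> \<le> K1 * unorm p * (K2 * unorm q)"
        using K1(1) K2(2)[rule_format, of q] unorm_nonneg[of p] by (intro mult_left_mono) auto
      finally show ?thesis by (simp add: algebra_simps)
    qed
  qed (simp_all add: ulinD[OF assms] L_addl L_addr L_us L_sc)
qed

lemma bb_psi: "bb (\<lambda>p q. Rt (L p y) q)"
proof -
  obtain K1 where K1: "K1 > 0" "\<forall>p x. norm (L p x) \<le> K1 * unorm p * norm x" using L_bound by blast
  obtain K2 where K2: "K2 > 0" "\<forall>p x. norm (Rt x p) \<le> K2 * unorm p * norm x" using Rt_bound by blast
  show ?thesis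
  proof (rule bb_intro[where K="K2*K1*norm y"])
    show "norm (Rt (L p y) q) \<le> (K2*K1*norm y) * unorm p * unorm q" for p q
    proof -
      have "norm (Rt (L p y) q) \<le> K2 * unorm q * norm (L p y)" using K2 by blast
      also have "\<dots> \<le> K2 * unorm q * (K1 * unorm p * norm y)"
        using K1(2)[rule_format, of p y] K2(1) unorm_nonneg[of q] by (intro mult_left_mono) auto
      finally show ?thesis by (simp add: algebra_simps)
    qed
  qed (simp_all add: L_addl L_addr L_us L_sc Rt_addl Rt_addr Rt_us Rt_sc)
qed

lemma ulin_L: "ulin (\<lambda>q. L q y)"
proof -
  obtain K1 where K1: "K1 > 0" "\<forall>p x. norm (L p x) \<le> K1 * unorm p * norm x" using L_bound by blast
  have "norm (L p y) \<le> (K1 * norm y) * unorm p" for p using K1(2)[rule_format, of p y] by (simp add: algebra_simps)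
  thus ?thesis unfolding ulin_def by (auto simp: L_addl L_us)
qed

end

context jctx begin

lemma bsum_summable:
  assumes "bb B" "is_ptrep r"
  shows "summable (\<lambda>n. norm (B (fst (r n)) (snd (r n))))" "summable (\<lambda>n. B (fst (r n)) (snd (r n)))"
    "\<exists>K>0. norm (bsum B r) \<le> K * (\<Sum>n. unorm (fst (r n)) * unorm (snd (r n)))"
proof -
  obtain K where K: "K > 0" "\<forall>p q. norm (B p q) \<le> K * unorm p * unorm q" using bb_bound[OF assms(1)] by blast
  have g: "summable (\<lambda>n. K * (unorm (fst (r n)) * unorm (snd (r n))))"
    using assms(2) unfolding is_ptrep_def by (rule summable_mult)
  have le: "norm (norm (B (fst (r n)) (snd (r n)))) \<le> K * (unorm (fst (r n)) * unorm (snd (r n)))" for n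
    using K(2)[rule_format, of "fst (r n)" "snd (r n)"] by (simp add: algebra_simps)
  show s1: "summable (\<lambda>n. norm (B (fst (r n)) (snd (r n))))"
    by (rule summable_comparison_test[OF _ g]) (use le in auto)
  show s2: "summable (\<lambda>n. B (fst (r n)) (snd (r n)))"
    by (rule summable_norm_cancel[OF s1])
  have "norm (bsum B r) \<le> (\<Sum>n. norm (B (fst (r n)) (snd (r n))))"
    unfolding bsum_def by (rule summable_norm[OF s1])
  also have "\<dots> \<le> (\<Sum>n. K * (unorm (fst (r n)) * unorm (snd (r n))))"
    by (rule suminf_le[OF _ s1 g]) (use le in auto)
  also have "\<dots> = K * (\<Sum>n. unorm (fst (r n)) * unorm (snd (r n)))"
    using assms(2) unfolding is_ptrep_def by (rule suminf_mult)
  finally show "\<exists>K>0. norm (bsum B r) \<le> K * (\<Sum>n. unorm (fst (r n)) * unorm (snd (r n)))"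
    using K(1) by blast
qed

lemma bsum_add:
  assumes "bb B1" "bb B2" "is_ptrep r"
  shows "bsum (\<lambda>p q. B1 p q + B2 p q) r = bsum B1 r + bsum B2 r"
  unfolding bsum_def using bsum_summable(2)[OF assms(1,3)] bsum_summable(2)[OF assms(2,3)]
  by (rule suminf_add[symmetric])

lemma bsum_diff:
  assumes "bb B1" "bb B2" "is_ptrep r"
  shows "bsum (\<lambda>p q. B1 p q - B2 p q) r = bsum B1 r - bsum B2 r"
  unfolding bsum_def using bsum_summable(2)[OF assms(1,3)] bsum_summable(2)[OF assms(2,3)]
  by (rule suminf_diff[symmetric])

lemma bsum_bl:
  assumes "bb B" "bounded_linear F" "is_ptrep r"
  shows "bsum (\<lambda>p q. F (B p q)) r = F (bsum B r)"
  unfolding bsum_def using bounded_linear.suminf[OF assms(2) bsum_summable(2)[OF assms(1,3)]] by simp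

lemma bsum_xlin:
  assumes "bb B" "xlin F" "is_ptrep r"
  shows "bsum (\<lambda>p q. F (B p q)) r = F (bsum B r)"
  using bsum_bl[OF assms(1) xlin_bl[OF assms(2)] assms(3)] .

lemma bsum_cong: "(\<And>p q. B p q = B' p q) \<Longrightarrow> bsum B r = bsum B' r"
  unfolding bsum_def by simp

lemma is_ptrep_flip: "is_ptrep r \<Longrightarrow> is_ptrep (ptflip r)"
  unfolding is_ptrep_def ptflip_def by (simp add: mult.commute)

lemma bsum_flip: "bsum B (ptflip r) = bsum (\<lambda>p q. B q p) r"
  unfolding bsum_def ptflip_def by simp

lemma bsum_lmult: "bsum B (ptlmult scA a r) = bsum (\<lambda>p q. B (mu a p) q) r"
  unfolding bsum_def ptlmult_def by simp

lemma bsum_rmult: "bsum B (ptrmult scA r a) = bsum (\<lambda>p q. B p (mu q a)) r"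
  unfolding bsum_def ptrmult_def by simp

lemma is_ptrep_lmult: assumes "is_ptrep r" shows "is_ptrep (ptlmult scA a r)"
proof -
  have g: "summable (\<lambda>n. unorm a * (unorm (fst (r n)) * unorm (snd (r n))))"
    using assms unfolding is_ptrep_def by (rule summable_mult)
  have le: "norm (unorm (mu a (fst (r n))) * unorm (snd (r n))) \<le> unorm a * (unorm (fst (r n)) * unorm (snd (r n)))" for n
  proof -
    have "norm (unorm (mu a (fst (r n))) * unorm (snd (r n))) = unorm (mu a (fst (r n))) * unorm (snd (r n))"
      using unorm_nonneg[of "mu a (fst (r n))"] unorm_nonneg[of "snd (r n)"] by simp
    also have "\<dots> \<le> (unorm a * unorm (fst (r n))) * unorm (snd (r n))"
      by (rule mult_right_mono[OF unorm_mu unorm_nonneg])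
    finally show ?thesis by (simp only: mult.assoc)
  qed
  have "summable (\<lambda>n. unorm (mu a (fst (r n))) * unorm (snd (r n)))"
    by (rule summable_comparison_test'[OF g le])
  thus ?thesis unfolding is_ptrep_def ptlmult_def by simp
qed

lemma is_ptrep_rmult: assumes "is_ptrep r" shows "is_ptrep (ptrmult scA r a)"
proof -
  have g: "summable (\<lambda>n. unorm a * (unorm (fst (r n)) * unorm (snd (r n))))"
    using assms unfolding is_ptrep_def by (rule summable_mult)
  have le: "norm (unorm (fst (r n)) * unorm (mu (snd (r n)) a)) \<le> unorm a * (unorm (fst (r n)) * unorm (snd (r n)))" for n
  proof -
    have "norm (unorm (fst (r n)) * unorm (mu (snd (r n)) a)) = unorm (fst (r n)) * unorm (mu (snd (r n)) a)"
      using unorm_nonneg[of "mu (snd (r n)) a"] unorm_nonneg[of "fst (r n)"] by simp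
    also have "\<dots> \<le> unorm (fst (r n)) * (unorm (snd (r n)) * unorm a)"
      by (rule mult_left_mono[OF unorm_mu unorm_nonneg])
    finally show ?thesis by (simp only: mult.assoc mult.commute mult.left_commute)
  qed
  have "summable (\<lambda>n. unorm (fst (r n)) * unorm (mu (snd (r n)) a))"
    by (rule summable_comparison_test'[OF g le])
  thus ?thesis unfolding is_ptrep_def ptrmult_def by simp
qed

lemma ptdiff_terms:
  "(\<lambda>n. F (fst (ptdiff r s n)) (snd (ptdiff r s n))) =
   (\<lambda>n. if even n then F (fst (r (n div 2))) (snd (r (n div 2))) else F (- fst (s (n div 2))) (snd (s (n div 2))))"
  unfolding ptdiff_def by auto

lemma is_ptrep_diff: assumes "is_ptrep r" "is_ptrep s" shows "is_ptrep (ptdiff r s)"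
proof -
  have "(\<lambda>n. if even n then unorm (fst (r (n div 2))) * unorm (snd (r (n div 2)))
      else unorm (fst (s (n div 2))) * unorm (snd (s (n div 2)))) sums
      ((\<Sum>n. unorm (fst (r n)) * unorm (snd (r n))) + (\<Sum>n. unorm (fst (s n)) * unorm (snd (s n))))"
    using assms unfolding is_ptrep_def by (intro interleave_sums) (auto simp: summable_sums)
  hence "summable (\<lambda>n. if even n then unorm (fst (r (n div 2))) * unorm (snd (r (n div 2)))
      else unorm (fst (s (n div 2))) * unorm (snd (s (n div 2))))" by (rule sums_summable)
  thus ?thesis unfolding is_ptrep_def ptdiff_terms[of "\<lambda>p q. unorm p * unorm q"] unorm_minus .
qed

lemma bsum_ptdiff:
  assumes "bb B" "is_ptrep r" "is_ptrep s"
  shows "bsum B (ptdiff r s) = bsum B r - bsum B s"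
proof -
  have a: "(\<lambda>n. B (fst (r n)) (snd (r n))) sums bsum B r"
    unfolding bsum_def by (rule summable_sums[OF bsum_summable(2)[OF assms(1,2)]])
  have b: "(\<lambda>n. - B (fst (s n)) (snd (s n))) sums (- bsum B s)"
    unfolding bsum_def by (rule sums_minus[OF summable_sums[OF bsum_summable(2)[OF assms(1,3)]]])
  have "(\<lambda>n. if even n then B (fst (r (n div 2))) (snd (r (n div 2))) else - B (fst (s (n div 2))) (snd (s (n div 2))))
     sums (bsum B r + - bsum B s)"
    using interleave_sums[OF a b] by simp
  hence "(\<lambda>n. B (fst (ptdiff r s n)) (snd (ptdiff r s n))) sums (bsum B r - bsum B s)"
    unfolding ptdiff_terms bb_minusl[OF assms(1)] by simp
  thus ?thesis unfolding bsum_def[of B "ptdiff r s"] by (rule sums_unique[symmetric])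
qed

lemma cfun_exists:
  fixes z :: 'x
  assumes "z \<noteq> 0"
  shows "\<exists>g::'x \<Rightarrow> complex. bounded_linear g \<and> (\<forall>k x. g (scX k x) = k * g x) \<and> g z \<noteq> 0"
proof -
  obtain f :: "'x \<Rightarrow> real" where f: "bounded_linear f" "f z \<noteq> 0" using hb_sep[OF assms] by blast
  interpret f: bounded_linear f by (rule f(1))
  have bi: "bounded_linear (scX \<i>)"
    by (rule bounded_linear_intro[of _ 1]) (simp_all add: sX_norm)
  define g where "g x = complex_of_real (f x) - \<i> * complex_of_real (f (scX \<i> x))" for x
  have b1: "bounded_linear (\<lambda>x. complex_of_real (f x))"
    by (rule bounded_linear_compose[OF bounded_linear_of_real f(1)])
  have b2: "bounded_linear (\<lambda>x. complex_of_real (f (scX \<i> x)))"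
    by (rule bounded_linear_compose[OF bounded_linear_of_real bounded_linear_compose[OF f(1) bi]])
  have b3: "bounded_linear (\<lambda>x. \<i> * complex_of_real (f (scX \<i> x)))"
    by (rule bounded_linear_compose[OF bounded_linear_mult_right b2])
  have "bounded_linear g" unfolding g_def by (rule bounded_linear_sub[OF b1 b3])
  moreover have "g (scX k x) = k * g x" for k x
  proof -
    have k: "k = complex_of_real (Re k) + \<i> * complex_of_real (Im k)" by (simp add: complex_eq_iff)
    have sk: "scX k x = Re k *\<^sub>R x + Im k *\<^sub>R scX \<i> x"
      by (subst k, simp only: sX_addc sX_mult sX_ofreal sX_scaleR)
    have ii: "scX \<i> (scX \<i> x) = - x"
      using sX_mult[of \<i> \<i> x, symmetric] sX_ofreal[of "-1" x] by simp
    have "scX \<i> (scX k x) = Re k *\<^sub>R scX \<i> x - Im k *\<^sub>R x"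
      unfolding sk by (simp add: ii)
    show ?thesis unfolding g_def sk
      by (simp add: \<open>scX \<i> (scX k x) = Re k *\<^sub>R scX \<i> x - Im k *\<^sub>R x\<close>[unfolded sk] f.add f.scaleR f.diff
          complex_eq_iff algebra_simps ii f.neg)
  qed
  moreover have "g z \<noteq> 0" using f(2) unfolding g_def by (auto simp: complex_eq_iff)
  ultimately show ?thesis by blast
qed

lemma bsum_equiv:
  assumes B: "bb B" and r: "is_ptrep r" and s: "is_ptrep s" and e: "ptequiv scA r s"
  shows "bsum B r = bsum B s"
proof (rule ccontr)
  assume ne: "bsum B r \<noteq> bsum B s"
  then obtain g :: "'x \<Rightarrow> complex" where g: "bounded_linear g" "\<And>k x. g (scX k x) = k * g x"
    "g (bsum B r - bsum B s) \<noteq> 0"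
    using cfun_exists[of "bsum B r - bsum B s"] by auto
  interpret g: bounded_linear g by (rule g(1))
  obtain Kg where Kg: "\<And>x. norm (g x) \<le> norm x * Kg" "Kg > 0" using g.pos_bounded by blast
  obtain K where K: "K > 0" "\<forall>p q. norm (B p q) \<le> K * unorm p * unorm q" using bb_bound[OF B] by blast
  have "cbilform scA (\<lambda>p q. g (B p q))"
    unfolding cbilform_def
  proof (intro conjI allI)
    show "g (B (u + v) w) = g (B u w) + g (B v w)" for u v w by (simp add: bbD[OF B] g.add)
    show "g (B u (v + w)) = g (B u v) + g (B u w)" for u v w by (simp add: bbD[OF B] g.add)
    show "g (B (uscale scA k u) v) = k * g (B u v)" for k u v
      by (simp add: bbD[OF B] g(2))
    show "g (B u (uscale scA k v)) = k * g (B u v)" for k u v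
      by (simp add: bbD[OF B] g(2))
    have "cmod (g (B u v)) \<le> (Kg * K) * unorm u * unorm v" for u v
    proof -
      have "cmod (g (B u v)) \<le> norm (B u v) * Kg" using Kg(1) by simp
      also have "\<dots> \<le> (K * unorm u * unorm v) * Kg" using K(2)[rule_format, of u v] Kg(2) by (intro mult_right_mono) auto
      finally show ?thesis by (simp add: algebra_simps)
    qed
    thus "\<exists>K. \<forall>u v. cmod (g (B u v)) \<le> K * unorm u * unorm v" by blast
  qed
  hence "(\<Sum>n. g (B (fst (r n)) (snd (r n)))) = (\<Sum>n. g (B (fst (s n)) (snd (s n))))"
    using e unfolding ptequiv_def by blast
  hence "g (bsum B r) = g (bsum B s)"
    unfolding bsum_def using g.suminf[OF bsum_summable(2)[OF B r]] g.suminf[OF bsum_summable(2)[OF B s]] by simp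
  thus False using g(3) by (simp add: g.diff)
qed

lemma bsum_ptnorm:
  assumes B: "bb B"
  shows "\<exists>K>0. \<forall>r. is_ptrep r \<longrightarrow> norm (bsum B r) \<le> K * ptnorm scA r"
proof -
  obtain K where K: "K > 0" "\<forall>p q. norm (B p q) \<le> K * unorm p * unorm q" using bb_bound[OF B] by blast
  have "norm (bsum B r) \<le> K * ptnorm scA r" if r: "is_ptrep r" for r
  proof -
    let ?S = "{(\<Sum>n. unorm (fst (s n)) * unorm (snd (s n))) | s. is_ptrep s \<and> ptequiv scA r s}"
    have ne: "?S \<noteq> {}" using r unfolding ptequiv_def by blast
    have "norm (bsum B r) / K \<le> x" if xS: "x \<in> ?S" for x
    proof -
      obtain s where s: "x = (\<Sum>n. unorm (fst (s n)) * unorm (snd (s n)))" "is_ptrep s" "ptequiv scA r s"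
        using xS by blast
      have eq: "bsum B r = bsum B s" by (rule bsum_equiv[OF B r s(2,3)])
      have "summable (\<lambda>n. K * (unorm (fst (s n)) * unorm (snd (s n))))"
        using s(2) unfolding is_ptrep_def by (rule summable_mult)
      have "norm (bsum B s) \<le> (\<Sum>n. norm (B (fst (s n)) (snd (s n))))"
        unfolding bsum_def by (rule summable_norm[OF bsum_summable(1)[OF B s(2)]])
      also have "\<dots> \<le> (\<Sum>n. K * (unorm (fst (s n)) * unorm (snd (s n))))"
        by (rule suminf_le[OF _ bsum_summable(1)[OF B s(2)] \<open>summable _\<close>])
          (use K(2)[rule_format, of "fst (s n)" "snd (s n)" for n] in \<open>simp add: algebra_simps\<close>)
      also have "\<dots> = K * x"
        using s(2) unfolding is_ptrep_def s(1) by (rule suminf_mult)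
      finally show ?thesis using K(1) eq by (simp add: field_simps)
    qed
    hence "norm (bsum B r) / K \<le> Inf ?S" using ne by (intro cInf_greatest) auto
    thus ?thesis unfolding ptnorm_def using K(1) by (simp add: field_simps)
  qed
  thus ?thesis using K(1) by blast
qed

end

definition nz :: "'l set \<Rightarrow> ('l \<Rightarrow> 'l \<Rightarrow> bool) \<Rightarrow> ('l \<Rightarrow> 'v::real_normed_vector) \<Rightarrow> bool" where
  "nz \<Lambda> le y \<longleftrightarrow> (\<forall>e>0. \<exists>i0\<in>\<Lambda>. \<forall>i\<in>\<Lambda>. le i0 i \<longrightarrow> norm (y i) < e)"

lemma nz_add:
  assumes d: "directed_set \<Lambda> le" and y: "nz \<Lambda> le y" and z: "nz \<Lambda> le z"
  shows "nz \<Lambda> le (\<lambda>i. y i + z i)"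
  unfolding nz_def
proof (intro allI impI)
  fix e :: real assume e: "e > 0"
  have e2: "e/2 > 0" using e by simp
  obtain i1 where i1: "i1 \<in> \<Lambda>" "\<forall>i\<in>\<Lambda>. le i1 i \<longrightarrow> norm (y i) < e/2" using y[unfolded nz_def, rule_format, OF e2] by blast
  obtain i2 where i2: "i2 \<in> \<Lambda>" "\<forall>i\<in>\<Lambda>. le i2 i \<longrightarrow> norm (z i) < e/2" using z[unfolded nz_def, rule_format, OF e2] by blast
  obtain k where k: "k \<in> \<Lambda>" "le i1 k" "le i2 k" using d i1(1) i2(1) unfolding directed_set_def by blast
  have "norm (y i + z i) < e" if "i \<in> \<Lambda>" "le k i" for i
  proof -
    have "le i1 i" "le i2 i" using d that k i1(1) i2(1) unfolding directed_set_def by blast+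
    hence "norm (y i) < e/2" "norm (z i) < e/2" using i1 i2 that by blast+
    thus ?thesis using norm_triangle_ineq[of "y i" "z i"] by linarith
  qed
  thus "\<exists>i0\<in>\<Lambda>. \<forall>i\<in>\<Lambda>. le i0 i \<longrightarrow> norm (y i + z i) < e" using k(1) by blast
qed

lemma nz_bl:
  assumes F: "bounded_linear F" and y: "nz \<Lambda> le y"
  shows "nz \<Lambda> le (\<lambda>i. F (y i))"
  unfolding nz_def
proof (intro allI impI)
  fix e :: real assume e: "e > 0"
  obtain K where K: "K > 0" "\<And>x. norm (F x) \<le> norm x * K" using bounded_linear.pos_bounded[OF F] by blast
  have eK: "e/K > 0" using e K(1) by simp
  obtain i1 where i1: "i1 \<in> \<Lambda>" "\<forall>i\<in>\<Lambda>. le i1 i \<longrightarrow> norm (y i) < e/K" using y[unfolded nz_def, rule_format, OF eK] by blast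
  have "norm (F (y i)) < e" if "i \<in> \<Lambda>" "le i1 i" for i
  proof -
    have "norm (F (y i)) \<le> norm (y i) * K" by (rule K(2))
    also have "\<dots> < (e/K) * K" using i1 that K(1) by (intro mult_strict_right_mono) auto
    finally show ?thesis using K(1) by simp
  qed
  thus "\<exists>i0\<in>\<Lambda>. \<forall>i\<in>\<Lambda>. le i0 i \<longrightarrow> norm (F (y i)) < e" using i1(1) by blast
qed

lemma nz_minus: "nz \<Lambda> le y \<Longrightarrow> nz \<Lambda> le (\<lambda>i. - y i)"
  unfolding nz_def by simp

lemma nz_diff:
  assumes d: "directed_set \<Lambda> le" and y: "nz \<Lambda> le y" and z: "nz \<Lambda> le z"
  shows "nz \<Lambda> le (\<lambda>i. y i - z i)"
  using nz_add[OF d y nz_minus[OF z]] by simp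

lemma nz_scaleR: "nz \<Lambda> le y \<Longrightarrow> nz \<Lambda> le (\<lambda>i. c *\<^sub>R y i)"
  using nz_bl[OF bounded_linear_scaleR_right] by blast

lemma nz_cong: assumes "nz \<Lambda> le y" "\<And>i. i \<in> \<Lambda> \<Longrightarrow> y i = z i" shows "nz \<Lambda> le z"
  unfolding nz_def
proof (intro allI impI)
  fix e :: real assume e: "e > 0"
  obtain i1 where i1: "i1 \<in> \<Lambda>" "\<forall>i\<in>\<Lambda>. le i1 i \<longrightarrow> norm (y i) < e" using assms(1)[unfolded nz_def, rule_format, OF e] by blast
  thus "\<exists>i0\<in>\<Lambda>. \<forall>i\<in>\<Lambda>. le i0 i \<longrightarrow> norm (z i) < e" using assms(2) by auto
qed

lemma nz_bound:
  assumes "\<And>i. i \<in> \<Lambda> \<Longrightarrow> norm (y i) \<le> K * f i" "net_to_0 \<Lambda> le f"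
  shows "nz \<Lambda> le y"
  unfolding nz_def
proof (intro allI impI)
  fix e :: real assume e: "e > 0"
  define K' where "K' = \<bar>K\<bar> + 1"
  have K': "K' > 0" unfolding K'_def by simp
  have eK: "e/K' > 0" using e K' by simp
  obtain i1 where i1: "i1 \<in> \<Lambda>" "\<forall>i\<in>\<Lambda>. le i1 i \<longrightarrow> \<bar>f i\<bar> < e/K'" using assms(2)[unfolded net_to_0_def, rule_format, OF eK] by blast
  have "norm (y i) < e" if "i \<in> \<Lambda>" "le i1 i" for i
  proof -
    have "norm (y i) \<le> K * f i" using assms(1) that by blast
    also have "\<dots> \<le> \<bar>K\<bar> * \<bar>f i\<bar>" by (metis abs_ge_self abs_mult)
    also have "\<dots> \<le> K' * \<bar>f i\<bar>" unfolding K'_def by (intro mult_right_mono) auto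
    also have "\<dots> < K' * (e/K')" using i1 that K' by (intro mult_strict_left_mono) auto
    finally show ?thesis using K' by simp
  qed
  thus "\<exists>i0\<in>\<Lambda>. \<forall>i\<in>\<Lambda>. le i0 i \<longrightarrow> norm (y i) < e" using i1(1) by blast
qed

lemma nz_const:
  assumes d: "directed_set \<Lambda> le" and "nz \<Lambda> le (\<lambda>i. c)" shows "c = 0"
proof (rule ccontr)
  assume "c \<noteq> 0"
  hence "norm c > 0" by simp
  then obtain i0 where "i0 \<in> \<Lambda>" "\<forall>i\<in>\<Lambda>. le i0 i \<longrightarrow> norm c < norm c" using assms(2)[unfolded nz_def, rule_format, of "norm c"] by blast
  moreover have "le i0 i0" using d \<open>i0 \<in> \<Lambda>\<close> unfolding directed_set_def by blast
  ultimately show False by blast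
qed

locale jmain = jctx scA scX lm rm
  for scA :: "complex \<Rightarrow> 'a::{real_normed_algebra,banach} \<Rightarrow> 'a"
    and scX :: "complex \<Rightarrow> 'x::banach \<Rightarrow> 'x"
    and lm :: "'a \<Rightarrow> 'x \<Rightarrow> 'x" and rm :: "'x \<Rightarrow> 'a \<Rightarrow> 'x" +
  fixes \<Lambda> :: "'l set" and le :: "'l \<Rightarrow> 'l \<Rightarrow> bool"
    and t :: "'l \<Rightarrow> 'a ptrep" and D :: "'a \<Rightarrow> 'x"
  assumes sad: "sym_approx_diagonal scA \<Lambda> le t"
    and Dlin: "bdd_clinear scA scX D"
    and Djor: "jordan_derivation lm rm D"
begin

lemma dir: "directed_set \<Lambda> le" using sad unfolding sym_approx_diagonal_def by blast
lemma tp: "i \<in> \<Lambda> \<Longrightarrow> is_ptrep (t i)" using sad unfolding sym_approx_diagonal_def by blast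
lemma tsym: "i \<in> \<Lambda> \<Longrightarrow> ptequiv scA (ptflip (t i)) (t i)" using sad unfolding sym_approx_diagonal_def by blast
lemma tc: "net_to_0 \<Lambda> le (\<lambda>i. ptnorm scA (ptdiff (ptlmult scA u (t i)) (ptrmult scA (t i) u)))"
  using sad unfolding sym_approx_diagonal_def by blast
lemma tpi: "net_to_0 \<Lambda> le (\<lambda>i. unorm (umult scA (ptpi scA (t i)) u - u))"
  using sad unfolding sym_approx_diagonal_def by blast

lemma S: assumes "bb B" "i \<in> \<Lambda>" shows "bsum B (t i) = bsum (\<lambda>p q. B q p) (t i)"
proof -
  have "bsum B (ptflip (t i)) = bsum B (t i)"
    by (rule bsum_equiv[OF assms(1) is_ptrep_flip[OF tp[OF assms(2)]] tp[OF assms(2)] tsym[OF assms(2)]])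
  thus ?thesis unfolding bsum_flip by simp
qed

lemma C: assumes B: "bb B"
  shows "nz \<Lambda> le (\<lambda>i. bsum (\<lambda>p q. B (mu a p) q) (t i) - bsum (\<lambda>p q. B p (mu q a)) (t i))"
proof -
  obtain K where K: "K > 0" "\<forall>r. is_ptrep r \<longrightarrow> norm (bsum B r) \<le> K * ptnorm scA r"
    using bsum_ptnorm[OF B] by blast
  show ?thesis
  proof (rule nz_bound[OF _ tc[of a]])
    fix i assume i: "i \<in> \<Lambda>"
    have r1: "is_ptrep (ptlmult scA a (t i))" by (rule is_ptrep_lmult[OF tp[OF i]])
    have r2: "is_ptrep (ptrmult scA (t i) a)" by (rule is_ptrep_rmult[OF tp[OF i]])
    have "bsum (\<lambda>p q. B (mu a p) q) (t i) - bsum (\<lambda>p q. B p (mu q a)) (t i)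
        = bsum B (ptdiff (ptlmult scA a (t i)) (ptrmult scA (t i) a))"
      by (simp add: bsum_ptdiff[OF B r1 r2] bsum_lmult bsum_rmult)
    also have "norm \<dots> \<le> K * ptnorm scA (ptdiff (ptlmult scA a (t i)) (ptrmult scA (t i) a))"
      using K(2) is_ptrep_diff[OF r1 r2] by blast
    finally show "norm (bsum (\<lambda>p q. B (mu a p) q) (t i) - bsum (\<lambda>p q. B p (mu q a)) (t i))
        \<le> K * ptnorm scA (ptdiff (ptlmult scA a (t i)) (ptrmult scA (t i) a))" .
  qed
qed

lemma C': assumes B: "bb B"
  shows "nz \<Lambda> le (\<lambda>i. bsum (\<lambda>p q. B p (mu a q)) (t i) - bsum (\<lambda>p q. B (mu p a) q) (t i))"
proof (rule nz_cong[OF C[OF bb_flip[OF B], of a]])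
  fix i assume i: "i \<in> \<Lambda>"
  have 1: "bsum (\<lambda>p q. B p (mu a q)) (t i) = bsum (\<lambda>p q. B q (mu a p)) (t i)"
    using S[OF bb_rmul2[OF B, of a] i] .
  have 2: "bsum (\<lambda>p q. B (mu p a) q) (t i) = bsum (\<lambda>p q. B (mu q a) p) (t i)"
    using S[OF bb_lmul2[OF B, of a] i] .
  show "bsum (\<lambda>p q. B q (mu a p)) (t i) - bsum (\<lambda>p q. B (mu q a) p) (t i) =
        bsum (\<lambda>p q. B p (mu a q)) (t i) - bsum (\<lambda>p q. B (mu p a) q) (t i)"
    using 1 2 by simp
qed

definition Dh :: "'a \<times> complex \<Rightarrow> 'x" where "Dh p = D (fst p)"

lemma D_add: "D (a + b) = D a + D b" using Dlin unfolding bdd_clinear_def by blast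
lemma D_sc: "D (scA c a) = scX c (D a)" using Dlin unfolding bdd_clinear_def by blast
lemma D_0: "D 0 = 0" using D_add[of 0 0] by simp
lemma D_minus: "D (- a) = - D a" using D_add[of a "-a"] D_0 by (simp add: add_eq_0_iff)
lemma D_diff: "D (a - b) = D a - D b" using D_add[of a "-b"] D_minus by simp
lemma D_bound: "\<exists>K. \<forall>a. norm (D a) \<le> K * norm a" using Dlin unfolding bdd_clinear_def by blast

lemma ulin_Dh: "ulin Dh"
proof -
  obtain K where K: "\<forall>a. norm (D a) \<le> K * norm a" using D_bound by blast
  have "norm (Dh p) \<le> \<bar>K\<bar> * unorm p" for p
  proof -
    have "norm (Dh p) \<le> K * norm (fst p)" using K unfolding Dh_def by blast
    also have "\<dots> \<le> \<bar>K\<bar> * norm (fst p)" by (intro mult_right_mono) auto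
    also have "\<dots> \<le> \<bar>K\<bar> * unorm p" unfolding unorm_def by (intro mult_left_mono) auto
    finally show ?thesis .
  qed
  hence "\<exists>K. \<forall>p. norm (Dh p) \<le> K * unorm p" by blast
  moreover have "\<forall>p q. Dh (p + q) = Dh p + Dh q" by (simp add: Dh_def D_add)
  moreover have "\<forall>k p. Dh (us k p) = scX k (Dh p)" by (simp add: Dh_def D_sc uscale_def)
  ultimately show ?thesis unfolding ulin_def by blast
qed

lemma Dh_jordan: "Dh (mu p q + mu q p) = Rt (Dh p) q + L p (Dh q) + Rt (Dh q) p + L q (Dh p)"
proof (cases p; cases q)
  fix a c b d assume pq: "p = (a, c)" "q = (b, d)"
  have j: "D (a * b) + D (b * a) = rm (D a) b + lm a (D b) + rm (D b) a + lm b (D a)"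
    using Djor unfolding jordan_derivation_def by (metis D_add)
  show ?thesis using j unfolding pq Dh_def
    by (simp add: mu_simp L_simp Rt_simp D_add D_sc algebra_simps)
qed

definition Dl :: "'a \<times> complex \<Rightarrow> 'a \<times> complex \<Rightarrow> 'x" where
  "Dl p q = Dh (mu p q) - Rt (Dh p) q - L p (Dh q)"

lemma Dl_anti: "Dl q p = - Dl p q"
proof -
  have "Dh (mu p q) + Dh (mu q p) = Rt (Dh p) q + L p (Dh q) + Rt (Dh q) p + L q (Dh p)"
    using Dh_jordan ulinD(1)[OF ulin_Dh] by metis
  thus ?thesis unfolding Dl_def by (simp add: algebra_simps)
qed

lemma bb_B1: "bb (\<lambda>p q. L p (Dh q))" by (rule bb_L[OF ulin_Dh])
lemma bb_B3: "bb (\<lambda>p q. L p (L q y))" by (rule bb_L[OF ulin_L])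
lemma bb_cong: "bb B \<Longrightarrow> (\<And>p q. B p q = B' p q) \<Longrightarrow> bb B'"
proof -
  assume "bb B" "\<And>p q. B p q = B' p q"
  hence "B = B'" by (intro ext) auto
  thus "bb B'" using \<open>bb B\<close> by simp
qed

lemma bb_Dl: "bb (\<lambda>p q. L p (Dl q a))"
proof -
  have "bb (\<lambda>p q. L p (Dh (mu q a)) - Rt (L p (Dh q)) a - L p (L q (Dh a)))"
    by (intro bb_diff bb_rmul bb_B1 bb_B3 bb_xlin[OF xlin_Rt])
  thus ?thesis by (rule bb_cong) (simp add: Dl_def L_diffr L_Rt)
qed

definition xi where "xi i = bsum (\<lambda>p q. L p (Dh q)) (t i)"
definition P where "P i y = bsum (\<lambda>p q. Rt (L p y) q) (t i)"
definition ad where "ad i a = L a (xi i) - Rt (xi i) a"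

lemma pi_sum: assumes i: "i \<in> \<Lambda>" shows "bsum (\<lambda>p q. L p (L q y)) (t i) = L (ptpi scA (t i)) y"
proof -
  obtain K where K: "K > 0" "\<forall>p x. norm (L p x) \<le> K * unorm p * norm x" using L_bound by blast
  have bl: "bounded_linear (\<lambda>p. L p y)"
  proof (rule bounded_linear_intro[of _ "2 * K * norm y"])
    show "L (p + q) y = L p y + L q y" for p q by (rule L_addl)
    show "L (r *\<^sub>R p) y = r *\<^sub>R L p y" for r p by (rule L_scaleRl)
    show "norm (L p y) \<le> norm p * (2 * K * norm y)" for p
    proof -
      have "norm (L p y) \<le> K * unorm p * norm y" using K by blast
      also have "\<dots> \<le> K * (2 * norm p) * norm y" using K(1) unorm_le_norm[of p]
        by (intro mult_right_mono mult_left_mono) auto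
      finally show ?thesis by (simp add: algebra_simps)
    qed
  qed
  have g: "summable (\<lambda>n. unorm (fst (t i n)) * unorm (snd (t i n)))" using tp[OF i] unfolding is_ptrep_def .
  have "summable (\<lambda>n. mu (fst (t i n)) (snd (t i n)))"
  proof (rule summable_comparison_test'[OF g])
    fix n show "norm (mu (fst (t i n)) (snd (t i n))) \<le> unorm (fst (t i n)) * unorm (snd (t i n))"
      using norm_le_unorm unorm_mu order_trans by blast
  qed
  from bounded_linear.suminf[OF bl this]
  show ?thesis unfolding bsum_def ptpi_def by (simp add: L_mu)
qed

lemma pi_conv: "nz \<Lambda> le (\<lambda>i. bsum (\<lambda>p q. L p (L q y)) (t i) - y)"
proof -
  obtain K where K: "K > 0" "\<forall>p x. norm (L p x) \<le> K * unorm p * norm x" using L_bound by blast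
  have "nz \<Lambda> le (\<lambda>i. L (ptpi scA (t i)) y - y)"
  proof (rule nz_bound[OF _ tpi[of "(0,1)"]])
    fix i
    have "L (ptpi scA (t i)) y - y = L (mu (ptpi scA (t i)) (0,1) - (0,1)) y" by (simp add: L_diffl)
    also have "norm \<dots> \<le> (K * norm y) * unorm (mu (ptpi scA (t i)) (0,1) - (0,1))"
      using K(2)[rule_format, of "mu (ptpi scA (t i)) (0,1) - (0,1)" y] by (simp add: algebra_simps)
    finally show "norm (L (ptpi scA (t i)) y - y) \<le> (K * norm y) * unorm (mu (ptpi scA (t i)) (0,1) - (0,1))" .
  qed
  thus ?thesis by (rule nz_cong) (simp add: pi_sum)
qed

end

context jmain begin

lemma P_add: "i \<in> \<Lambda> \<Longrightarrow> P i (x + y) = P i x + P i y"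
  unfolding P_def by (subst bsum_add[OF bb_psi bb_psi tp, symmetric]) (auto intro!: bsum_cong simp: L_addr Rt_addl)
lemma P_minus: "i \<in> \<Lambda> \<Longrightarrow> P i (- x) = - P i x"
  using P_add[of i x "-x"] by (simp add: add_eq_0_iff P_def bsum_def)
lemma P_diff: "i \<in> \<Lambda> \<Longrightarrow> P i (x - y) = P i x - P i y"
  using P_add[of i x "-y"] P_minus[of i y] by simp

lemma keyK: "nz \<Lambda> le (\<lambda>i. Dh a + P i (Dh a) - ad i a)"
proof -
  define T1 where "T1 i = bsum (\<lambda>p q. L (mu a p) (Dh q)) (t i)" for i
  define T2 where "T2 i = bsum (\<lambda>p q. L p (Dh (mu q a))) (t i)" for i
  define T3 where "T3 i = bsum (\<lambda>p q. L p (L q (Dh a))) (t i)" for i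
  define T4 where "T4 i = bsum (\<lambda>p q. L p (Dh (mu a q))) (t i)" for i
  define T5 where "T5 i = bsum (\<lambda>p q. L (mu p a) (Dh q)) (t i)" for i
  define TD where "TD i = bsum (\<lambda>p q. L p (Dl q a)) (t i)" for i
  have n1: "nz \<Lambda> le (\<lambda>i. T3 i - Dh a)" unfolding T3_def by (rule pi_conv)
  have n2: "nz \<Lambda> le (\<lambda>i. T1 i - T2 i)" unfolding T1_def T2_def by (rule C[OF bb_B1])
  have n3: "nz \<Lambda> le (\<lambda>i. T4 i - T5 i)" unfolding T4_def T5_def by (rule C'[OF bb_B1])
  have n: "nz \<Lambda> le (\<lambda>i. (T4 i - T5 i) - (T1 i - T2 i) - (T3 i - Dh a))"
    by (intro nz_diff[OF dir] n1 n2 n3)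
  show ?thesis
  proof (rule nz_cong[OF n])
    fix i assume i: "i \<in> \<Lambda>"
    note r = tp[OF i]
    have E1: "L a (xi i) = T1 i"
      unfolding xi_def T1_def by (subst bsum_xlin[OF bb_B1 xlin_L r, symmetric]) (simp add: L_mu)
    have "Rt (xi i) a = bsum (\<lambda>p q. Rt (L p (Dh q)) a) (t i)"
      unfolding xi_def by (rule bsum_xlin[OF bb_B1 xlin_Rt r, symmetric])
    also have "\<dots> = bsum (\<lambda>p q. (L p (Dh (mu q a)) - L p (L q (Dh a))) - L p (Dl q a)) (t i)"
      by (rule bsum_cong) (simp add: Dl_def L_diffr L_Rt)
    also have "\<dots> = T2 i - T3 i - TD i"
      unfolding T2_def T3_def TD_def
      by (simp add: bsum_diff[OF bb_diff[OF bb_rmul[OF bb_B1] bb_B3] bb_Dl r] bsum_diff[OF bb_rmul[OF bb_B1] bb_B3 r])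
    finally have E2: "Rt (xi i) a = T2 i - T3 i - TD i" .
    have "TD i = bsum (\<lambda>p q. (Rt (L p (Dh a)) q + L (mu p a) (Dh q)) - L p (Dh (mu a q))) (t i)"
      unfolding TD_def by (rule bsum_cong, subst Dl_anti) (simp add: Dl_def L_diffr L_minusr L_addr L_Rt L_mu algebra_simps)
    also have "\<dots> = P i (Dh a) + T5 i - T4 i"
      unfolding P_def T5_def T4_def
      by (simp add: bsum_diff[OF bb_add[OF bb_psi bb_lmul2[OF bb_B1]] bb_rmul2[OF bb_B1] r]
          bsum_add[OF bb_psi bb_lmul2[OF bb_B1] r])
    finally have E3: "TD i = P i (Dh a) + T5 i - T4 i" .
    show "(T4 i - T5 i) - (T1 i - T2 i) - (T3 i - Dh a) = Dh a + P i (Dh a) - ad i a"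
      unfolding ad_def E1 E2 E3 by (simp add: algebra_simps)
  qed
qed

end

context jmain begin

definition N where "N i c = Dh c + P i (Dh c) - ad i c"

lemma nzN: "nz \<Lambda> le (\<lambda>i. N i c)" unfolding N_def by (rule keyK)

lemma bl_comm: "bounded_linear (\<lambda>w. Rt w b - L b w)"
  by (intro bounded_linear_sub xlin_bl xlin_Rt xlin_L)

lemma comm_P: "nz \<Lambda> le (\<lambda>i. L b (P i y) - Rt (P i y) b)"
proof (rule nz_cong[OF C[OF bb_psi[of y], of b]])
  fix i assume i: "i \<in> \<Lambda>"
  have 1: "L b (P i y) = bsum (\<lambda>p q. Rt (L (mu b p) y) q) (t i)"
    unfolding P_def by (subst bsum_xlin[OF bb_psi xlin_L tp[OF i], symmetric]) (simp add: L_Rt L_mu)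
  have 2: "Rt (P i y) b = bsum (\<lambda>p q. Rt (L p y) (mu q b)) (t i)"
    unfolding P_def by (subst bsum_xlin[OF bb_psi xlin_Rt tp[OF i], symmetric]) (simp add: Rt_mu)
  show "bsum (\<lambda>p q. Rt (L (mu b p) y) q) (t i) - bsum (\<lambda>p q. Rt (L p y) (mu q b)) (t i) =
        L b (P i y) - Rt (P i y) b" using 1 2 by simp
qed

lemma P_comm: "nz \<Lambda> le (\<lambda>i. P i (Rt y b) - P i (L b y))"
proof (rule nz_cong[OF C'[OF bb_psi[of y], of b]])
  fix i assume i: "i \<in> \<Lambda>"
  have 1: "P i (Rt y b) = bsum (\<lambda>p q. Rt (L p y) (mu b q)) (t i)"
    unfolding P_def by (rule bsum_cong) (simp add: L_Rt Rt_mu)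
  have 2: "P i (L b y) = bsum (\<lambda>p q. Rt (L (mu p b) y) q) (t i)"
    unfolding P_def by (rule bsum_cong) (simp add: L_mu)
  show "bsum (\<lambda>p q. Rt (L p y) (mu b q)) (t i) - bsum (\<lambda>p q. Rt (L (mu p b) y) q) (t i) =
        P i (Rt y b) - P i (L b y)" using 1 2 by simp
qed

lemma ad_cancel:
  "ad i (mu a b) - ad i (mu b a) - (Rt (ad i a) b - L b (ad i a)) + (Rt (ad i b) a - L a (ad i b)) = 0"
  unfolding ad_def by (simp add: L_mu Rt_mu L_Rt L_diffr Rt_diffl algebra_simps)

lemma keyQ: "nz \<Lambda> le (\<lambda>i. Dl a b + P i (Dl a b))"
proof -
  define y where "y = Dh a"
  define z where "z = Dh b"
  have v1: "nz \<Lambda> le (\<lambda>i. N i (mu a b))" by (rule nzN)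
  have v2: "nz \<Lambda> le (\<lambda>i. N i (mu b a))" by (rule nzN)
  have v3: "nz \<Lambda> le (\<lambda>i. Rt (N i a) b - L b (N i a))" by (rule nz_bl[OF bl_comm nzN])
  have v4: "nz \<Lambda> le (\<lambda>i. Rt (N i b) a - L a (N i b))" by (rule nz_bl[OF bl_comm nzN])
  have v5: "nz \<Lambda> le (\<lambda>i. L b (P i y) - Rt (P i y) b)" by (rule comm_P)
  have v6: "nz \<Lambda> le (\<lambda>i. P i (Rt y b) - P i (L b y))" by (rule P_comm)
  have v7: "nz \<Lambda> le (\<lambda>i. L a (P i z) - Rt (P i z) a)" by (rule comm_P)
  have v8: "nz \<Lambda> le (\<lambda>i. P i (Rt z a) - P i (L a z))" by (rule P_comm)
  have all: "nz \<Lambda> le (\<lambda>i. N i (mu a b) - N i (mu b a) - (Rt (N i a) b - L b (N i a))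
      - (L b (P i y) - Rt (P i y) b) - (P i (Rt y b) - P i (L b y))
      + (Rt (N i b) a - L a (N i b)) + (L a (P i z) - Rt (P i z) a) + (P i (Rt z a) - P i (L a z)))"
    by (intro nz_add[OF dir] nz_diff[OF dir] v1 v2 v3 v4 v5 v6 v7 v8)
  have "nz \<Lambda> le (\<lambda>i. 2 *\<^sub>R (Dl a b + P i (Dl a b)))"
  proof (rule nz_cong[OF all])
    fix i assume i: "i \<in> \<Lambda>"
    have dab: "Dl a b = Dh (mu a b) - Rt y b - L a z" unfolding Dl_def y_def z_def ..
    have dba: "Dl a b = - (Dh (mu b a) - Rt z a - L b y)" using Dl_anti[of a b] unfolding Dl_def y_def z_def by simp
    have q1: "Dl a b + P i (Dl a b) = (Dh (mu a b) - Rt y b - L a z) + P i (Dh (mu a b) - Rt y b - L a z)"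
      by (simp only: dab)
    have q2: "Dl a b + P i (Dl a b) = - (Dh (mu b a) - Rt z a - L b y) + P i (- (Dh (mu b a) - Rt z a - L b y))"
      by (simp only: dba)
    have p1: "P i (Dh (mu a b) - Rt y b - L a z) = P i (Dh (mu a b)) - P i (Rt y b) - P i (L a z)"
      by (simp only: P_diff[OF i])
    have p2: "P i (- (Dh (mu b a) - Rt z a - L b y)) = - (P i (Dh (mu b a)) - P i (Rt z a) - P i (L b y))"
      by (simp only: P_diff[OF i] P_minus[OF i])
    have two: "2 *\<^sub>R (Dl a b + P i (Dl a b)) =
       (Dh (mu a b) - Rt y b - L a z) + (P i (Dh (mu a b)) - P i (Rt y b) - P i (L a z))
       + (- (Dh (mu b a) - Rt z a - L b y) + - (P i (Dh (mu b a)) - P i (Rt z a) - P i (L b y)))"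
    proof -
      have "2 *\<^sub>R (Dl a b + P i (Dl a b)) = (Dl a b + P i (Dl a b)) + (Dl a b + P i (Dl a b))"
        by (rule scaleR_2)
      also have "\<dots> = ((Dh (mu a b) - Rt y b - L a z) + P i (Dh (mu a b) - Rt y b - L a z))
         + (- (Dh (mu b a) - Rt z a - L b y) + P i (- (Dh (mu b a) - Rt z a - L b y)))"
        by (simp only: q1[symmetric] q2[symmetric])
      finally show ?thesis by (simp only: p1 p2)
    qed
    have ea: "Rt (N i a) b - L b (N i a) = (Rt y b - L b y) + (Rt (P i y) b - L b (P i y)) - (Rt (ad i a) b - L b (ad i a))"
      unfolding N_def y_def[symmetric] by (simp add: Rt_diffl Rt_addl L_diffr L_addr algebra_simps)
    have eb: "Rt (N i b) a - L a (N i b) = (Rt z a - L a z) + (Rt (P i z) a - L a (P i z)) - (Rt (ad i b) a - L a (ad i b))"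
      unfolding N_def z_def[symmetric] by (simp add: Rt_diffl Rt_addl L_diffr L_addr algebra_simps)
    have Nab: "N i (mu a b) = Dh (mu a b) + P i (Dh (mu a b)) - ad i (mu a b)" unfolding N_def ..
    have Nba: "N i (mu b a) = Dh (mu b a) + P i (Dh (mu b a)) - ad i (mu b a)" unfolding N_def ..
    have c: "ad i (mu a b) = ad i (mu b a) + (Rt (ad i a) b - L b (ad i a)) - (Rt (ad i b) a - L a (ad i b))"
      using ad_cancel[of i a b] by (simp add: algebra_simps)
    show "N i (mu a b) - N i (mu b a) - (Rt (N i a) b - L b (N i a))
      - (L b (P i y) - Rt (P i y) b) - (P i (Rt y b) - P i (L b y))
      + (Rt (N i b) a - L a (N i b)) + (L a (P i z) - Rt (P i z) a) + (P i (Rt z a) - P i (L a z))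
      = 2 *\<^sub>R (Dl a b + P i (Dl a b))"
      unfolding two ea eb Nab Nba c by (simp add: algebra_simps)
  qed
  from nz_scaleR[OF this, of "1/2"] show ?thesis by simp
qed

lemma Dl_zero: "Dl a b = 0"
proof -
  define x where "x = Dl a b"
  have hQ: "nz \<Lambda> le (\<lambda>i. x + P i x)" unfolding x_def by (rule keyQ)
  have comm: "L c x = Rt x c" for c
  proof -
    have "bounded_linear (\<lambda>w. L c w - Rt w c)" by (intro bounded_linear_sub xlin_bl xlin_Rt xlin_L)
    from nz_bl[OF this hQ] have 1: "nz \<Lambda> le (\<lambda>i. L c (x + P i x) - Rt (x + P i x) c)" .
    have 2: "nz \<Lambda> le (\<lambda>i. L c (P i x) - Rt (P i x) c)" by (rule comm_P)
    have "nz \<Lambda> le (\<lambda>i. L c x - Rt x c)"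
      using nz_diff[OF dir 1 2] by (simp add: L_addr Rt_addl)
    from nz_const[OF dir this] show ?thesis by simp
  qed
  have 3: "nz \<Lambda> le (\<lambda>i. P i x - x)"
  proof (rule nz_cong[OF pi_conv[of x]])
    fix i assume "i \<in> \<Lambda>"
    show "bsum (\<lambda>p q. L p (L q x)) (t i) - x = P i x - x"
    proof -
      have "Rt (L p x) q = L p (L q x)" for p q using L_Rt[of p x q] comm[of q] by simp
      hence "P i x = bsum (\<lambda>p q. L p (L q x)) (t i)" unfolding P_def by (intro bsum_cong) simp
      thus ?thesis by simp
    qed
  qed
  have "nz \<Lambda> le (\<lambda>i. 2 *\<^sub>R x)"
    using nz_diff[OF dir hQ 3] by (simp add: scaleR_2)
  from nz_const[OF dir this] have "x = 0" by simp
  thus ?thesis unfolding x_def .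
qed

lemma is_der: "is_derivation lm rm D"
  unfolding is_derivation_def
proof (intro allI)
  fix a b
  have "Dl (a, 0) (b, 0) = 0" by (rule Dl_zero)
  thus "D (a * b) = rm (D a) b + lm a (D b)"
    unfolding Dl_def Dh_def by (simp add: mu_U L_simp Rt_simp algebra_simps)
qed

end

theorem theorem5p1:
  fixes scA :: "complex \<Rightarrow> 'a::{real_normed_algebra,banach} \<Rightarrow> 'a"
    and scX :: "complex \<Rightarrow> 'x::banach \<Rightarrow> 'x"
    and lm :: "'a \<Rightarrow> 'x \<Rightarrow> 'x" and rm :: "'x \<Rightarrow> 'a \<Rightarrow> 'x"
    and \<Lambda> :: "'l set" and le :: "'l \<Rightarrow> 'l \<Rightarrow> bool"
    and t :: "'l \<Rightarrow> 'a ptrep"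
    and D :: "'a \<Rightarrow> 'x"
  assumes "complex_banach_algebra scA"
    and "complex_banach_space scX"
    and "banach_bimodule scA scX lm rm"
    and "sym_approx_diagonal scA \<Lambda> le t"
    and "\<forall>x. net_bounded \<Lambda> (\<lambda>i. ppsi lm rm scX x (t i))"
    and "\<forall>T. bdd_clinear scA scX T \<and> jordan_derivation lm rm T \<longrightarrow>
           net_bounded \<Lambda> (\<lambda>i. pPhi lm scX T (t i))"
    and "bdd_clinear scA scX D"
    and "jordan_derivation lm rm D"
  shows "is_derivation lm rm D"
proof -
  have "jmain scA scX lm rm \<Lambda> le t D"
    unfolding jmain_def jmain_axioms_def jctx_def using assms by blast
  then interpret J: jmain scA scX lm rm \<Lambda> le t D .
  show ?thesis by (rule J.is_der)
qed

end
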